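(* Let $Q=(q_{ij})\in\mathbb{R}^{k\times k}$ be lower triangular with all diagonal blocks scalar (so $d_i=1$ for all $i$, $k=d$, and $\rho_i=q_{ii}>0$), let $(X_i)$ be the associated absorbed Markov chain with initial distribution $\pi=(\pi_1,\dots,\pi_k)$ and absorption time $T$, and suppose $\pi_{\theta_1}\neq0$ for some $\theta=(\theta_1,\dots,\theta_\kappa)\in\mathcal{P}_{\max}$. Then for all $\ell\in\{1,\dots,k\}$: (i) if $\rho_\ell<\rho_{\max}$ or $\mathcal{P}^{(\ell)}_{\max}=\emptyset$, then $\lim_{n\to\infty}\mathbb{E}_\pi\big[\tfrac{1}{n+1}\#\{m\in\{0,\dots,n\}:X_m\in I_\ell\}\,\big|\,T>n\big]=0$; (ii) if $\rho_\ell=\rho_{\max}$ and $\mathcal{P}^{(\ell)}_{\max}\neq\emptyset$, then \[ \lim_{n\to\infty}\mathbb{E}_\pi\Big[\tfrac{1}{n+1}\#\{m\in\{0,\dots,n\}:X_m\in I_\ell\}\,\Big|\,T>n\Big]=\frac{1}{h^+_{\max}}\,\frac{\sum_{\theta\in\mathcal{P}^{(\ell)}_{\max}}\pi_{\theta_1}q_{\theta_1\theta_2}\cdots q_{\theta_{\kappa-1}\theta_\kappa}\prod_{u\in H^-(\theta)}\frac{1}{\rho_{\max}-\rho_{\theta_u}}}{\sum_{\theta\in\mathcal{P}_{\max}}\pi_{\theta_1}q_{\theta_1\theta_2}\cdots q_{\theta_{\kappa-1}\theta_\kappa}\prod_{u\in H^-(\theta)}\frac{1}{\rho_{\max}-\rho_{\theta_u}}}.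 \]
   Context: Let $P=\begin{pmatrix}1&0\\R&Q\end{pmatrix}$ be a stochastic matrix with $R\in\mathbb{R}^{k\times1}$, $Q\in\mathbb{R}^{k\times k}$, $R,Q\neq0$, $k\ge2$, all eigenvalues of $Q$ of modulus $<1$. $(X_i)$ is the Markov chain with transition matrix $P$ (state $0$ absorbing) and initial distribution $\pi$ on $\{1,\dots,k\}$; $T=\min\{i:X_i=0\}$. Here $Q$ is lower triangular with positive diagonal entries $q_{ii}=:\rho_i$, and $I_\ell=\{\ell\}$. Admissible path: strictly decreasing $\theta=(\theta_1,\dots,\theta_\kappa)$ in $\{1,\dots,k\}$ with $q_{\theta_u\theta_{u+1}}\neq0$ for $u<\kappa$; $\mathcal{P}$ is their set, $\mathcal{P}^{(\ell)}$ those containing $\ell$. $\rho(\theta)=\max_u\rho_{\theta_u}$, $H^+(\theta)=\{u:\rho_{\theta_u}=\rho(\theta)\}$, $H^-(\theta)=\{u:\rho_{\theta_u}<\rho(\theta)\}$, $h^+(\theta)=\#H^+(\theta)$; $\rho_{\max}=\max_i\rho_i$; $h^+_{\max}=\max\{h^+(\theta):\theta\in\mathcal{P},\rho(\theta)=\rho_{\max}\}$; $\mathcal{P}_{\max}=\{\theta\in\mathcal{P}:h^+(\theta)=h^+_{\max},\rho(\theta)=\rho_{\max}\}$; $\mathcal{P}^{(\ell)}_{\max}=\mathcal{P}^{(\ell)}\cap\mathcal{P}_{\max}$. An empty product equals $1$. *)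

theory Defs
  imports Complex_Main "HOL-Library.FuncSet"
begin

text \<open>Matrices are functions nat => nat => real; the transient states are 1..k,
  state 0 is the absorbing state.\<close>

definition lower_triangular :: "nat \<Rightarrow> (nat \<Rightarrow> nat \<Rightarrow> real) \<Rightarrow> bool" where
  "lower_triangular k Q \<longleftrightarrow> (\<forall>i\<in>{1..k}. \<forall>j\<in>{1..k}. i < j \<longrightarrow> Q i j = 0)"

definition is_eigenvalue :: "nat \<Rightarrow> (nat \<Rightarrow> nat \<Rightarrow> real) \<Rightarrow> complex \<Rightarrow> bool" where
  "is_eigenvalue k Q z \<longleftrightarrow> (\<exists>v :: nat \<Rightarrow> complex. (\<exists>i\<in>{1..k}. v i \<noteq> 0) \<and>
      (\<forall>i\<in>{1..k}. (\<Sum>j=1..k. complex_of_real (Q i j) * v j) = z * v i))"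

definition Pmat :: "(nat \<Rightarrow> real) \<Rightarrow> (nat \<Rightarrow> nat \<Rightarrow> real) \<Rightarrow> nat \<Rightarrow> nat \<Rightarrow> real" where
  "Pmat R Q i j = (if i = 0 then (if j = 0 then 1 else 0) else if j = 0 then R i else Q i j)"

definition stochastic :: "nat \<Rightarrow> (nat \<Rightarrow> nat \<Rightarrow> real) \<Rightarrow> bool" where
  "stochastic k P \<longleftrightarrow> (\<forall>i\<in>{0..k}. (\<forall>j\<in>{0..k}. P i j \<ge> 0) \<and> (\<Sum>j=0..k. P i j) = 1)"

definition init :: "nat \<Rightarrow> (nat \<Rightarrow> real) \<Rightarrow> nat \<Rightarrow> real" where
  "init k \<pi> x = (if x \<in> {1..k} then \<pi> x else 0)"

definition path_prob :: "nat \<Rightarrow> (nat \<Rightarrow> real) \<Rightarrow> (nat \<Rightarrow> real) \<Rightarrow> (nat \<Rightarrow> nat \<Rightarrow> real)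
    \<Rightarrow> nat \<Rightarrow> (nat \<Rightarrow> nat) \<Rightarrow> real" where
  "path_prob k \<pi> R Q n x = init k \<pi> (x 0) * (\<Prod>i<n. Pmat R Q (x i) (x (Suc i)))"

definition trajectories :: "nat \<Rightarrow> nat \<Rightarrow> (nat \<Rightarrow> nat) set" where
  "trajectories k n = PiE {0..n} (\<lambda>_. {0..k})"

definition T_gt :: "nat \<Rightarrow> (nat \<Rightarrow> nat) \<Rightarrow> bool" where
  "T_gt n x \<longleftrightarrow> (\<forall>m\<in>{0..n}. x m \<noteq> 0)"

definition I_set :: "nat \<Rightarrow> nat set" where
  "I_set l = {l}"

text \<open>E_pi[ (1/(n+1)) #{m in 0..n : X_m in I_l} | T > n ].\<close>
definition occ_cond_exp :: "nat \<Rightarrow> (nat \<Rightarrow> real) \<Rightarrow> (nat \<Rightarrow> real) \<Rightarrow> (nat \<Rightarrow> nat \<Rightarrow> real)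
    \<Rightarrow> nat \<Rightarrow> nat \<Rightarrow> real" where
  "occ_cond_exp k \<pi> R Q l n =
     (\<Sum>x\<in>trajectories k n. path_prob k \<pi> R Q n x * (if T_gt n x then 1 else 0)
        * (real (card {m\<in>{0..n}. x m \<in> I_set l}) / real (n + 1)))
     / (\<Sum>x\<in>trajectories k n. path_prob k \<pi> R Q n x * (if T_gt n x then 1 else 0))"

text \<open>Admissible paths: nonempty strictly decreasing lists in {1..k} with nonzero
  consecutive transitions. theta_u is written th ! u (0-based).\<close>
definition admissible :: "nat \<Rightarrow> (nat \<Rightarrow> nat \<Rightarrow> real) \<Rightarrow> nat list \<Rightarrow> bool" where
  "admissible k Q th \<longleftrightarrow> th \<noteq> [] \<and> set th \<subseteq> {1..k} \<and> sorted_wrt (>) th \<and>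
     (\<forall>u. Suc u < length th \<longrightarrow> Q (th ! u) (th ! Suc u) \<noteq> 0)"

definition Paths :: "nat \<Rightarrow> (nat \<Rightarrow> nat \<Rightarrow> real) \<Rightarrow> nat list set" where
  "Paths k Q = {th. admissible k Q th}"

definition Paths_l :: "nat \<Rightarrow> (nat \<Rightarrow> nat \<Rightarrow> real) \<Rightarrow> nat \<Rightarrow> nat list set" where
  "Paths_l k Q l = {th \<in> Paths k Q. l \<in> set th}"

definition rho :: "(nat \<Rightarrow> nat \<Rightarrow> real) \<Rightarrow> nat \<Rightarrow> real" where
  "rho Q i = Q i i"

definition rho_path :: "(nat \<Rightarrow> nat \<Rightarrow> real) \<Rightarrow> nat list \<Rightarrow> real" where
  "rho_path Q th = Max ((\<lambda>u. rho Q (th ! u)) ` {..<length th})"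

definition Hplus :: "(nat \<Rightarrow> nat \<Rightarrow> real) \<Rightarrow> nat list \<Rightarrow> nat set" where
  "Hplus Q th = {u. u < length th \<and> rho Q (th ! u) = rho_path Q th}"

definition Hminus :: "(nat \<Rightarrow> nat \<Rightarrow> real) \<Rightarrow> nat list \<Rightarrow> nat set" where
  "Hminus Q th = {u. u < length th \<and> rho Q (th ! u) < rho_path Q th}"

definition hplus :: "(nat \<Rightarrow> nat \<Rightarrow> real) \<Rightarrow> nat list \<Rightarrow> nat" where
  "hplus Q th = card (Hplus Q th)"

definition rho_max :: "nat \<Rightarrow> (nat \<Rightarrow> nat \<Rightarrow> real) \<Rightarrow> real" where
  "rho_max k Q = Max (rho Q ` {1..k})"

definition hplus_max :: "nat \<Rightarrow> (nat \<Rightarrow> nat \<Rightarrow> real) \<Rightarrow> nat" where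
  "hplus_max k Q = Max {hplus Q th | th. th \<in> Paths k Q \<and> rho_path Q th = rho_max k Q}"

definition Paths_max :: "nat \<Rightarrow> (nat \<Rightarrow> nat \<Rightarrow> real) \<Rightarrow> nat list set" where
  "Paths_max k Q = {th \<in> Paths k Q. hplus Q th = hplus_max k Q \<and> rho_path Q th = rho_max k Q}"

definition Paths_max_l :: "nat \<Rightarrow> (nat \<Rightarrow> nat \<Rightarrow> real) \<Rightarrow> nat \<Rightarrow> nat list set" where
  "Paths_max_l k Q l = Paths_l k Q l \<inter> Paths_max k Q"

definition path_weight :: "nat \<Rightarrow> (nat \<Rightarrow> real) \<Rightarrow> (nat \<Rightarrow> nat \<Rightarrow> real) \<Rightarrow> nat list \<Rightarrow> real" where
  "path_weight k \<pi> Q th = \<pi> (th ! 0) * (\<Prod>u<length th - 1. Q (th ! u) (th ! Suc u))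
     * (\<Prod>u\<in>Hminus Q th. 1 / (rho_max k Q - rho Q (th ! u)))"

end

theory Submission
  imports Defs
begin

lemma contr_to_zero:
  fixes a b :: "nat \<Rightarrow> real" and q :: real
  assumes q: "0 \<le> q" "q < 1"
    and ev: "eventually (\<lambda>n. a (Suc n) \<le> q * a n + b n) sequentially"
    and b: "b \<longlonglongrightarrow> 0" and apos: "\<And>n. a n \<ge> 0"
  shows "a \<longlonglongrightarrow> 0"
proof (rule LIMSEQ_I)
  fix r :: real assume r: "0 < r"
  define d where "d = r * (1 - q) / 2"
  have d: "d > 0" using r q by (simp add: d_def)
  have "eventually (\<lambda>n. norm (b n) < d) sequentially"
    using b d by (simp add: tendsto_iff)
  with ev have "eventually (\<lambda>n. a (Suc n) \<le> q * a n + b n \<and> b n < d) sequentially"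
    by eventually_elim auto
  then obtain N where N: "\<And>n. n \<ge> N \<Longrightarrow> a (Suc n) \<le> q * a n + b n \<and> b n < d"
    by (auto simp: eventually_sequentially)
  define c where "c n = a n - r / 2" for n
  have step: "c (Suc n) \<le> q * c n" if "n \<ge> N" for n
  proof -
    have "a (Suc n) \<le> q * a n + d" using N[OF that] by linarith
    moreover have "q * (a n - r/2) = q * a n - q*r/2" by (simp add: algebra_simps)
    moreover have "d = r/2 - q*r/2" unfolding d_def by (simp add: field_simps)
    ultimately show ?thesis unfolding c_def by linarith
  qed
  have ind: "c (N + m) \<le> q ^ m * \<bar>c N\<bar>" for m
  proof (induction m)
    case 0 then show ?case by simp
  next
    case (Suc m)
    have "c (N + Suc m) \<le> q * c (N + m)" using step[of "N + m"] by simp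
    also have "\<dots> \<le> q * (q ^ m * \<bar>c N\<bar>)" using Suc q by (simp add: mult_left_mono)
    finally show ?case by simp
  qed
  have "(\<lambda>m. q ^ m * \<bar>c N\<bar>) \<longlonglongrightarrow> 0 * \<bar>c N\<bar>"
    by (intro tendsto_mult LIMSEQ_power_zero tendsto_const) (use q in auto)
  then have "eventually (\<lambda>m. dist (q ^ m * \<bar>c N\<bar>) 0 < r / 2) sequentially"
    using r by (intro tendstoD) auto
  then obtain M where M: "\<And>m. m \<ge> M \<Longrightarrow> \<bar>q ^ m * \<bar>c N\<bar>\<bar> < r / 2"
    by (auto simp: eventually_sequentially dist_real_def)
  show "\<exists>no. \<forall>n\<ge>no. norm (a n - 0) < r"
  proof (intro exI allI impI)
    fix n assume n: "n \<ge> N + M"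
    have "c (N + (n - N)) \<le> q ^ (n - N) * \<bar>c N\<bar>" by (rule ind)
    moreover have "q ^ (n - N) * \<bar>c N\<bar> < r / 2" using M[of "n - N"] n by linarith
    moreover have "N + (n - N) = n" using n by simp
    ultimately have "c n < r / 2" by simp
    then show "norm (a n - 0) < r" using apos[of n] by (simp add: c_def)
  qed
qed

lemma rec_lim:
  fixes x lam mu :: "nat \<Rightarrow> real"
  assumes lam: "lam \<longlonglongrightarrow> l" and mu: "mu \<longlonglongrightarrow> m" and l: "0 \<le> l" "l < 1"
    and ev: "eventually (\<lambda>n. x (Suc n) = lam n * x n + mu n) sequentially"
  shows "x \<longlonglongrightarrow> m / (1 - l)"
proof -
  define L where "L = m / (1 - l)"
  have L: "l * L + m - L = 0" using l by (simp add: L_def field_simps)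
  define q where "q = (1 + l) / 2"
  have q: "0 \<le> q" "q < 1" "l < q" using l by (auto simp: q_def)
  define e where "e n = x n - L" for n
  define eps where "eps n = lam n * L + mu n - L" for n
  have eps: "eps \<longlonglongrightarrow> 0"
  proof -
    have "eps \<longlonglongrightarrow> l * L + m - L" unfolding eps_def
      by (intro tendsto_intros lam mu)
    then show ?thesis using L by simp
  qed
  have "eventually (\<lambda>n. norm (lam n - l) < q - l) sequentially"
    using lam q by (simp add: tendsto_iff dist_real_def)
  then have evq: "eventually (\<lambda>n. \<bar>lam n\<bar> \<le> q) sequentially"
    by eventually_elim (use l in auto)
  have E: "eventually (\<lambda>n. \<bar>e (Suc n)\<bar> \<le> q * \<bar>e n\<bar> + \<bar>eps n\<bar>) sequentially"
    using ev evq
  proof eventually_elim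
    case (elim n)
    have "e (Suc n) = lam n * e n + eps n" using elim(1)
      by (simp add: e_def eps_def algebra_simps)
    then have "\<bar>e (Suc n)\<bar> \<le> \<bar>lam n\<bar> * \<bar>e n\<bar> + \<bar>eps n\<bar>"
      by (simp add: abs_mult[symmetric] abs_triangle_ineq)
    also have "\<dots> \<le> q * \<bar>e n\<bar> + \<bar>eps n\<bar>"
      using elim(2) by (simp add: mult_right_mono)
    finally show ?case .
  qed
  have E2: "(\<lambda>n. \<bar>eps n\<bar>) \<longlonglongrightarrow> 0" using eps by (rule tendsto_rabs_zero)
  have "(\<lambda>n. \<bar>e n\<bar>) \<longlonglongrightarrow> 0"
    by (rule contr_to_zero[OF q(1,2) E E2]) simp
  then have "e \<longlonglongrightarrow> 0" by (simp add: tendsto_rabs_zero_iff)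
  then have "(\<lambda>n. e n + L) \<longlonglongrightarrow> 0 + L" by (intro tendsto_intros)
  then show ?thesis by (simp add: e_def L_def)
qed

fun gg :: "real list \<Rightarrow> nat \<Rightarrow> real" where
  "gg [] n = 0"
| "gg (r # rs) 0 = (if rs = [] then 1 else 0)"
| "gg (r # rs) (Suc n) = r * gg (r # rs) n + gg rs n"

lemma gg_divdiff: "(a - b) * gg (a # b # rs) n = gg (a # rs) n - gg (b # rs) n"
proof (induction n)
  case 0 then show ?case by simp
next
  case (Suc n)
  have "(a - b) * gg (a # b # rs) (Suc n) = a * ((a - b) * gg (a # b # rs) n) + (a - b) * gg (b # rs) n"
    by (simp add: algebra_simps)
  also have "\<dots> = a * (gg (a # rs) n - gg (b # rs) n) + (a - b) * gg (b # rs) n"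
    by (simp only: Suc)
  also have "\<dots> = a * gg (a # rs) n - b * gg (b # rs) n"
    by (simp add: algebra_simps)
  also have "\<dots> = gg (a # rs) (Suc n) - gg (b # rs) (Suc n)" by simp
  finally show ?case .
qed

lemma gg_swap: "gg (a # b # rs) = gg (b # a # rs)"
proof (cases "a = b")
  case False
  show ?thesis
  proof
    fix n
    have "(a - b) * gg (a # b # rs) n = (a - b) * gg (b # a # rs) n"
      using gg_divdiff[of a b rs n] gg_divdiff[of b a rs n] by (simp add: algebra_simps)
    then show "gg (a # b # rs) n = gg (b # a # rs) n" using False by simp
  qed
qed simp

lemma gg_cong: 
  assumes "gg xs = gg ys" "length xs = length ys"
  shows "gg (r # xs) = gg (r # ys)"
proof
  fix n show "gg (r # xs) n = gg (r # ys) n"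
    by (induction n) (use assms in auto)
qed

lemma gg_move: "gg (us @ a # vs) = gg (a # us @ vs)"
proof (induction us)
  case Nil then show ?case by simp
next
  case (Cons u us)
  have "gg ((u # us) @ a # vs) = gg (u # a # us @ vs)"
    using gg_cong[OF Cons] by simp
  also have "\<dots> = gg (a # u # us @ vs)" by (rule gg_swap)
  finally show ?case by simp
qed

lemma gg_filter: "gg rs = gg (filter P rs @ filter (\<lambda>x. \<not> P x) rs)"
proof (induction rs)
  case Nil then show ?case by simp
next
  case (Cons a rs)
  have c: "gg (a # rs) = gg (a # filter P rs @ filter (\<lambda>x. \<not> P x) rs)"
    by (rule gg_cong[OF Cons]) (induction rs, auto)
  show ?case
  proof (cases "P a")
    case True then show ?thesis using c by simp
  next
    case False then show ?thesis using c gg_move[of "filter P rs" a "filter (\<lambda>x. \<not> P x) rs"] by simp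
  qed
qed

lemma filter_eq_replicate: "filter (\<lambda>x. x = a) xs = replicate (length (filter (\<lambda>x. x = a) xs)) a"
  by (induction xs) auto

lemma gg_single: "gg [r] n = r ^ n"
  by (induction n) auto

lemma gg_rep: "gg (replicate (Suc h) r) n = real (n choose h) * r ^ (n - h)"
proof (induction h arbitrary: n)
  case 0 then show ?case by (simp add: gg_single)
next
  case (Suc h)
  note IHh = Suc.IH
  show ?case
  proof (induction n)
    case 0 then show ?case by simp
  next
    case (Suc n)
    have "gg (replicate (Suc (Suc h)) r) (Suc n) = r * gg (replicate (Suc (Suc h)) r) n + gg (replicate (Suc h) r) n"
      by simp
    also have "\<dots> = r * (real (n choose Suc h) * r ^ (n - Suc h)) + real (n choose h) * r ^ (n - h)"
      using Suc.IH IHh[of n] by simp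
    also have "\<dots> = real (Suc n choose Suc h) * r ^ (Suc n - Suc h)"
    proof (cases "n \<ge> Suc h")
      case True
      then have "r * r ^ (n - Suc h) = r ^ (n - h)"
        by (metis Suc_diff_Suc Suc_le_lessD power_Suc)
      then show ?thesis by (simp add: algebra_simps)
    next
      case False
      then show ?thesis by (simp add: binomial_eq_0)
    qed
    finally show ?case .
  qed
qed

lemma binom_ratio: "(\<lambda>n. real (n choose k) / real (Suc n choose k)) \<longlonglongrightarrow> 1"
proof -
  have ev: "eventually (\<lambda>n. 1 - real k / real (Suc n) = real (n choose k) / real (Suc n choose k)) sequentially"
    using eventually_ge_at_top[of k]
  proof eventually_elim
    case (elim n)
    have e: "(Suc n - k) * (Suc n choose k) = Suc n * (n choose k)"
      using binomial_absorb_comp[of "Suc n" k] by simp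
    have pos: "real (Suc n choose k) > 0" using elim by simp
    have "real (Suc n - k) * real (Suc n choose k) = real (Suc n) * real (n choose k)"
      using e by (metis of_nat_mult)
    then have "real (n choose k) / real (Suc n choose k) = real (Suc n - k) / real (Suc n)"
      using pos by (simp add: field_simps)
    also have "\<dots> = 1 - real k / real (Suc n)" using elim by (simp add: field_simps of_nat_diff)
    finally show ?case by simp
  qed
  have "(\<lambda>n. real k / real n) \<longlonglongrightarrow> 0" by (rule lim_const_over_n)
  then have "(\<lambda>n. real k / real (Suc n)) \<longlonglongrightarrow> 0" by (rule LIMSEQ_Suc)
  then have "(\<lambda>n. 1 - real k / real (Suc n)) \<longlonglongrightarrow> 1 - 0" by (intro tendsto_intros)
  then show ?thesis using tendsto_cong[OF ev] by simp
qed

lemma gg_asym: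
  assumes h: "h \<ge> 1" and rho: "\<rho> > 0" and ls: "\<forall>r\<in>set ls. 0 \<le> r \<and> r < \<rho>"
  shows "(\<lambda>n. gg (ls @ replicate h \<rho>) n / (real (n choose (h - 1)) * \<rho> ^ n))
           \<longlonglongrightarrow> prod_list (map (\<lambda>r. 1 / (\<rho> - r)) ls) / \<rho> ^ (h - 1)"
  using ls
proof (induction ls)
  case Nil
  have "eventually (\<lambda>n. 1 / \<rho> ^ (h - 1) = gg (replicate h \<rho>) n / (real (n choose (h - 1)) * \<rho> ^ n)) sequentially"
    using eventually_ge_at_top[of "h - 1"]
  proof eventually_elim
    case (elim n)
    have hh: "h = Suc (h - 1)" using h by simp
    have "gg (replicate h \<rho>) n = real (n choose (h - 1)) * \<rho> ^ (n - (h - 1))"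
      by (subst hh) (rule gg_rep)
    moreover have "\<rho> ^ n = \<rho> ^ (n - (h - 1)) * \<rho> ^ (h - 1)"
      using elim by (simp add: power_add[symmetric])
    moreover have "real (n choose (h - 1)) > 0" using elim by simp
    ultimately show ?case using rho by (simp add: field_simps)
  qed
  then show ?case using Lim_transform_eventually[OF tendsto_const] by simp
next
  case (Cons r ls)
  define s where "s n = real (n choose (h - 1)) * \<rho> ^ n" for n
  define a where "a n = gg (ls @ replicate h \<rho>) n" for n
  define b where "b n = gg (r # ls @ replicate h \<rho>) n" for n
  define A where "A = prod_list (map (\<lambda>r. 1 / (\<rho> - r)) ls) / \<rho> ^ (h - 1)"
  have r: "0 \<le> r" "r < \<rho>" using Cons.prems by auto
  have IH: "(\<lambda>n. a n / s n) \<longlonglongrightarrow> A" using Cons by (simp add: a_def s_def A_def)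
  have sr: "(\<lambda>n. s n / s (Suc n)) \<longlonglongrightarrow> 1 * (1 / \<rho>)"
  proof -
    have "(\<lambda>n. real (n choose (h - 1)) / real (Suc n choose (h - 1)) * (1 / \<rho>)) \<longlonglongrightarrow> 1 * (1 / \<rho>)"
      by (intro tendsto_intros binom_ratio)
    moreover have "s n / s (Suc n) = real (n choose (h - 1)) / real (Suc n choose (h - 1)) * (1 / \<rho>)" for n
      using rho by (simp add: s_def field_simps)
    ultimately show ?thesis by simp
  qed
  have lam: "(\<lambda>n. r * (s n / s (Suc n))) \<longlonglongrightarrow> r * (1 * (1 / \<rho>))"
    by (intro tendsto_intros sr)
  have mu: "(\<lambda>n. (s n / s (Suc n)) * (a n / s n)) \<longlonglongrightarrow> (1 * (1 / \<rho>)) * A"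
    by (intro tendsto_intros sr IH)
  have ev: "eventually (\<lambda>n. b (Suc n) / s (Suc n) = r * (s n / s (Suc n)) * (b n / s n) + (s n / s (Suc n)) * (a n / s n)) sequentially"
    using eventually_ge_at_top[of "h - 1"]
  proof eventually_elim
    case (elim n)
    have "s n > 0" using elim rho by (simp add: s_def)
    moreover have "b (Suc n) = r * b n + a n" by (simp add: a_def b_def)
    ultimately show ?case by (simp add: field_simps add_divide_distrib)
  qed
  have "(\<lambda>n. b n / s n) \<longlonglongrightarrow> ((1 * (1 / \<rho>)) * A) / (1 - r * (1 * (1 / \<rho>)))"
    by (rule rec_lim[OF lam mu _ _ ev]) (use r rho in \<open>auto simp: field_simps\<close>)
  moreover have "((1 * (1 / \<rho>)) * A) / (1 - r * (1 * (1 / \<rho>))) = prod_list (map (\<lambda>r. 1 / (\<rho> - r)) (r # ls)) / \<rho> ^ (h - 1)"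
    using r rho by (simp add: A_def field_simps)
  ultimately show ?case by (simp add: b_def s_def)
qed

lemma pow_geo_zero:
  assumes "0 \<le> x" "x < 1"
  shows "(\<lambda>n. real n ^ a * x ^ n) \<longlonglongrightarrow> 0"
proof -
  have lam: "(\<lambda>n. (real (Suc n) / real n) ^ a * x) \<longlonglongrightarrow> 1 ^ a * x"
    by (intro tendsto_intros LIMSEQ_Suc_n_over_n)
  have ev: "eventually (\<lambda>n. real (Suc n) ^ a * x ^ Suc n = (real (Suc n) / real n) ^ a * x * (real n ^ a * x ^ n) + 0) sequentially"
    using eventually_ge_at_top[of 1]
  proof eventually_elim
    case (elim n)
    then have "real n > 0" by simp
    then have "(real (Suc n) / real n) ^ a * real n ^ a = real (Suc n) ^ a"
      by (simp add: power_divide)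
    then show ?case by (simp add: algebra_simps)
  qed
  have "(\<lambda>n. real n ^ a * x ^ n) \<longlonglongrightarrow> 0 / (1 - 1 ^ a * x)"
    by (rule rec_lim[OF lam tendsto_const _ _ ev]) (use assms in auto)
  then show ?thesis by simp
qed

lemma binom_compare:
  assumes r1: "0 < r1" and r12: "r1 \<le> r2" and ab: "a < b \<or> r1 < r2"
  shows "(\<lambda>n. real (n choose a) * r1 ^ n / (real (n choose b) * r2 ^ n)) \<longlonglongrightarrow> 0"
proof -
  define x where "x = r1 / r2"
  have r2: "r2 > 0" using r1 r12 by simp
  have x: "0 < x" "x \<le> 1" using r1 r12 r2 by (auto simp: x_def)
  define C where "C = real b ^ b"
  have ub: "eventually (\<lambda>n. real (n choose a) * r1 ^ n / (real (n choose b) * r2 ^ n) \<le> C * (real n ^ a * x ^ n / real n ^ b)) sequentially"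
    using eventually_ge_at_top[of "max 1 b"]
  proof eventually_elim
    case (elim n)
    have n: "n \<ge> 1" "n \<ge> b" using elim by auto
    have c1: "real (n choose a) \<le> real n ^ a"
    proof (cases "a \<le> n")
      case True then show ?thesis using binomial_le_pow[OF True] by (metis of_nat_le_iff of_nat_power)
    next
      case False then show ?thesis by (simp add: binomial_eq_0)
    qed
    have c2: "(real n / real b) ^ b \<le> real (n choose b)"
      using binomial_ge_n_over_k_pow_k[OF n(2)] by simp
    have c3: "real n ^ b / C \<le> real (n choose b)"
    proof (cases "b = 0")
      case True then show ?thesis by (simp add: C_def)
    next
      case False then show ?thesis using c2 by (simp add: C_def power_divide)
    qed
    have Cpos: "C > 0" by (cases "b = 0") (auto simp: C_def)
    have npos: "real n ^ b > 0" using n by simp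
    have "real (n choose a) * r1 ^ n / (real (n choose b) * r2 ^ n) = real (n choose a) * x ^ n / real (n choose b)"
      using r2 by (simp add: x_def power_divide)
    also have "\<dots> \<le> real n ^ a * x ^ n / (real n ^ b / C)"
      by (intro divide_mono mult_right_mono c1 c3) (use x Cpos npos in auto)
    also have "\<dots> = C * (real n ^ a * x ^ n / real n ^ b)" using Cpos by simp
    finally show ?case .
  qed
  have lb: "eventually (\<lambda>n. 0 \<le> real (n choose a) * r1 ^ n / (real (n choose b) * r2 ^ n)) sequentially"
    using r1 r2 by simp
  have lim: "(\<lambda>n. C * (real n ^ a * x ^ n / real n ^ b)) \<longlonglongrightarrow> 0"
  proof (cases "r1 < r2")
    case True
    then have "x < 1" using r2 by (simp add: x_def)
    then have G: "(\<lambda>n. real n ^ a * x ^ n) \<longlonglongrightarrow> 0" using pow_geo_zero x by simp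
    moreover have U: "eventually (\<lambda>n. real n ^ a * x ^ n / real n ^ b \<le> real n ^ a * x ^ n) sequentially"
      using eventually_ge_at_top[of 1]
    proof eventually_elim
      case (elim n)
      then have "real n ^ b \<ge> 1" by simp
      moreover have y: "0 \<le> real n ^ a * x ^ n" using x by simp
      ultimately have "real n ^ a * x ^ n / real n ^ b \<le> real n ^ a * x ^ n / 1"
        by (intro divide_left_mono) (use elim in auto)
      then show ?case using y by simp
    qed
    moreover have L: "eventually (\<lambda>n. 0 \<le> real n ^ a * x ^ n / real n ^ b) sequentially"
      using x by simp
    have "(\<lambda>n. real n ^ a * x ^ n / real n ^ b) \<longlonglongrightarrow> 0"
      by (rule tendsto_sandwich[of "\<lambda>n. 0", OF L U tendsto_const G])
    then show ?thesis by (rule tendsto_mult_right_zero)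
  next
    case False
    then have "x = 1" "a < b" using ab r12 r2 by (auto simp: x_def)
    have G: "(\<lambda>n. 1 / real n) \<longlonglongrightarrow> 0" using lim_const_over_n by blast
    moreover have U: "eventually (\<lambda>n. real n ^ a * x ^ n / real n ^ b \<le> 1 / real n) sequentially"
      using eventually_ge_at_top[of 1]
    proof eventually_elim
      case (elim n)
      have "real n ^ b = real n ^ a * real n ^ (b - a)"
        using \<open>a < b\<close> by (simp add: power_add[symmetric])
      moreover have "real n ^ (b - a) \<ge> real n"
        using power_increasing[of 1 "b - a" "real n"] elim \<open>a < b\<close> by simp
      ultimately show ?case using elim \<open>x = 1\<close> by (simp add: field_simps)
    qed
    moreover have L: "eventually (\<lambda>n. 0 \<le> real n ^ a * x ^ n / real n ^ b) sequentially"
      using x by simp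
    have "(\<lambda>n. real n ^ a * x ^ n / real n ^ b) \<longlonglongrightarrow> 0"
      by (rule tendsto_sandwich[of "\<lambda>n. 0", OF L U tendsto_const G])
    then show ?thesis by (rule tendsto_mult_right_zero)
  qed
  show ?thesis by (rule tendsto_sandwich[OF lb ub tendsto_const lim])
qed

definition PP :: "(nat \<Rightarrow> real) \<Rightarrow> (nat \<Rightarrow> nat \<Rightarrow> real) \<Rightarrow> nat \<Rightarrow> (nat \<Rightarrow> nat) \<Rightarrow> real" where
  "PP R Q n x = (\<Prod>i<n. Pmat R Q (x i) (x (Suc i)))"

definition cns :: "nat \<Rightarrow> (nat \<Rightarrow> nat) \<Rightarrow> nat \<Rightarrow> nat" where
  "cns a y m = (case m of 0 \<Rightarrow> a | Suc m' \<Rightarrow> y m')"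

lemma cns_0[simp]: "cns a y 0 = a" and cns_Suc[simp]: "cns a y (Suc m) = y m"
  by (simp_all add: cns_def)

lemma traj_Suc_bij: "bij_betw (\<lambda>(a, y). cns a y) ({0..k} \<times> trajectories k n) (trajectories k (Suc n))"
proof (rule bij_betwI')
  fix p q assume "p \<in> {0..k} \<times> trajectories k n" "q \<in> {0..k} \<times> trajectories k n"
  obtain a y where p: "p = (a, y)" by force
  obtain b z where q: "q = (b, z)" by force
  have "cns a y = cns b z \<longleftrightarrow> a = b \<and> y = z"
  proof
    assume h: "cns a y = cns b z"
    have "a = b" using fun_cong[OF h, of 0] by simp
    moreover have "y = z" using fun_cong[OF h, of "Suc m" for m] by auto
    ultimately show "a = b \<and> y = z" by simp
  qed auto
  then show "((\<lambda>(a, y). cns a y) p = (\<lambda>(a, y). cns a y) q) = (p = q)" using p q by simp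
next
  fix p assume "p \<in> {0..k} \<times> trajectories k n"
  then obtain a y where p: "p = (a, y)" "a \<in> {0..k}" "y \<in> trajectories k n" by force
  have "cns a y \<in> trajectories k (Suc n)"
    unfolding trajectories_def
  proof (rule PiE_I)
    fix m assume "m \<in> {0..Suc n}"
    then show "cns a y m \<in> {0..k}" using p by (cases m) (auto simp: trajectories_def PiE_iff)
  next
    fix m assume "m \<notin> {0..Suc n}"
    then obtain m' where "m = Suc m'" "m' \<notin> {0..n}" by (cases m) auto
    then show "cns a y m = undefined" using p by (auto simp: trajectories_def PiE_iff extensional_def)
  qed
  then show "(\<lambda>(a, y). cns a y) p \<in> trajectories k (Suc n)" using p by simp
next
  fix x assume x: "x \<in> trajectories k (Suc n)"
  define y where "y m = x (Suc m)" for m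
  have "x = cns (x 0) y" by (rule ext) (simp add: cns_def y_def split: nat.split)
  moreover have "x 0 \<in> {0..k}" using x by (auto simp: trajectories_def PiE_iff)
  moreover have "y \<in> trajectories k n"
    using x by (auto simp: trajectories_def PiE_iff y_def extensional_def)
  ultimately show "\<exists>p\<in>{0..k} \<times> trajectories k n. x = (\<lambda>(a, y). cns a y) p"
    by (intro bexI[of _ "(x 0, y)"]) auto
qed

lemma traj_Suc_sum:
  "(\<Sum>x\<in>trajectories k (Suc n). f x) = (\<Sum>a\<in>{0..k}. \<Sum>y\<in>trajectories k n. f (cns a y))"
proof -
  have "(\<Sum>x\<in>trajectories k (Suc n). f x) = (\<Sum>p\<in>{0..k} \<times> trajectories k n. f ((\<lambda>(a, y). cns a y) p))"
    using sum.reindex_bij_betw[OF traj_Suc_bij, of f k n] by simp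
  also have "\<dots> = (\<Sum>a\<in>{0..k}. \<Sum>y\<in>trajectories k n. f (cns a y))"
    by (simp add: sum.cartesian_product split_def)
  finally show ?thesis .
qed

lemma traj_0_bij: "bij_betw (\<lambda>a. cns a (\<lambda>_. undefined)) {0..k} (trajectories k 0)"
proof (rule bij_betwI')
  fix a b show "(cns a (\<lambda>_. undefined) = cns b (\<lambda>_. undefined)) = (a = b)"
    by (metis cns_0)
next
  fix a assume "a \<in> {0..k}"
  then show "cns a (\<lambda>_. undefined) \<in> trajectories k 0"
    by (auto simp: trajectories_def PiE_iff cns_def extensional_def split: nat.split)
next
  fix x assume x: "x \<in> trajectories k 0"
  have "x = cns (x 0) (\<lambda>_. undefined)"
  proof
    fix m show "x m = cns (x 0) (\<lambda>_. undefined) m"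
      using x by (cases m) (auto simp: trajectories_def PiE_iff extensional_def)
  qed
  moreover have "x 0 \<in> {0..k}" using x by (auto simp: trajectories_def PiE_iff)
  ultimately show "\<exists>a\<in>{0..k}. x = cns a (\<lambda>_. undefined)" by blast
qed

lemma traj_0_sum: "(\<Sum>x\<in>trajectories k 0. f x) = (\<Sum>a\<in>{0..k}. f (cns a (\<lambda>_. undefined)))"
  using sum.reindex_bij_betw[OF traj_0_bij, of f k] by simp

lemma PP_cns: "PP R Q (Suc n) (cns a y) = Pmat R Q a (y 0) * PP R Q n y"
  unfolding PP_def by (subst prod.lessThan_Suc_shift) simp

lemma PP_0[simp]: "PP R Q 0 x = 1" by (simp add: PP_def)

lemma T_gt_cns: "T_gt (Suc n) (cns a y) \<longleftrightarrow> a \<noteq> 0 \<and> T_gt n y"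
proof
  assume h: "T_gt (Suc n) (cns a y)"
  have "a \<noteq> 0" using h by (force simp: T_gt_def)
  moreover have "y m \<noteq> 0" if "m \<in> {0..n}" for m using h that
    unfolding T_gt_def by (metis atLeastAtMost_iff cns_Suc le0 Suc_le_mono)
  ultimately show "a \<noteq> 0 \<and> T_gt n y" by (simp add: T_gt_def)
next
  assume h: "a \<noteq> 0 \<and> T_gt n y"
  show "T_gt (Suc n) (cns a y)" unfolding T_gt_def
  proof
    fix m assume "m \<in> {0..Suc n}"
    then show "cns a y m \<noteq> 0" using h by (cases m) (auto simp: T_gt_def)
  qed
qed

lemma T_gt_0: "T_gt 0 x \<longleftrightarrow> x 0 \<noteq> 0" by (simp add: T_gt_def)

lemma card_cns: "card {m\<in>{0..Suc n}. cns a y m = l} = (if a = l then 1 else 0) + card {m\<in>{0..n}. y m = l}"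
proof -
  have e: "{m\<in>{0..Suc n}. cns a y m = l} = (if a = l then {0} else {}) \<union> Suc ` {m\<in>{0..n}. y m = l}"
  proof (rule set_eqI)
    fix m show "m \<in> {m\<in>{0..Suc n}. cns a y m = l} \<longleftrightarrow> m \<in> (if a = l then {0} else {}) \<union> Suc ` {m\<in>{0..n}. y m = l}"
      by (cases m) auto
  qed
  have "card ((if a = l then {0} else {}) \<union> Suc ` {m\<in>{0..n}. y m = l}) =
        card (if a = l then {0::nat} else {}) + card (Suc ` {m\<in>{0..n}. y m = l})"
    by (rule card_Un_disjoint) auto
  also have "card (Suc ` {m\<in>{0..n}. y m = l}) = card {m\<in>{0..n}. y m = l}"
    by (rule card_image) simp
  finally show ?thesis using e by simp
qed

lemma traj_T_start: "x \<in> trajectories k n \<Longrightarrow> T_gt n x \<Longrightarrow> x 0 \<in> {1..k}"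
proof -
  assume "x \<in> trajectories k n" "T_gt n x"
  then have "x 0 \<le> k" "x 0 \<noteq> 0" by (auto simp: trajectories_def T_gt_def PiE_iff)
  then show ?thesis by simp
qed

lemma sum_delta_traj:
  assumes "x \<in> trajectories k n"
  shows "(\<Sum>j\<in>{1..k}. if x 0 = j \<and> T_gt n x then F j else 0) = (if T_gt n x then F (x 0) else 0)"
proof (cases "T_gt n x")
  case True
  then have "x 0 \<in> {1..k}" using traj_T_start[OF assms] by simp
  then show ?thesis using True by (simp add: sum.delta)
qed simp

definition W :: "nat \<Rightarrow> (nat \<Rightarrow> real) \<Rightarrow> (nat \<Rightarrow> nat \<Rightarrow> real) \<Rightarrow> nat \<Rightarrow> nat \<Rightarrow> real" where
  "W k R Q n i = (\<Sum>x\<in>trajectories k n. if x 0 = i \<and> T_gt n x then PP R Q n x else 0)"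

definition M :: "nat \<Rightarrow> (nat \<Rightarrow> real) \<Rightarrow> (nat \<Rightarrow> nat \<Rightarrow> real) \<Rightarrow> nat \<Rightarrow> nat \<Rightarrow> nat \<Rightarrow> real" where
  "M k R Q l n i = (\<Sum>x\<in>trajectories k n. if x 0 = i \<and> T_gt n x
      then PP R Q n x * real (card {m\<in>{0..n}. x m = l}) else 0)"

lemma finite_traj[simp]: "finite (trajectories k n)"
  by (simp add: trajectories_def finite_PiE)

lemma step_sum:
  assumes i: "i \<ge> 1"
  shows "(\<Sum>y\<in>trajectories k n. if T_gt n y then Pmat R Q i (y 0) * G y else 0)
       = (\<Sum>j\<in>{1..k}. Q i j * (\<Sum>y\<in>trajectories k n. if y 0 = j \<and> T_gt n y then G y else 0))"
proof -
  have "(\<Sum>y\<in>trajectories k n. if T_gt n y then Pmat R Q i (y 0) * G y else 0)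
      = (\<Sum>y\<in>trajectories k n. \<Sum>j\<in>{1..k}. if y 0 = j \<and> T_gt n y then Q i j * G y else 0)"
  proof (rule sum.cong[OF refl])
    fix y assume y: "y \<in> trajectories k n"
    have "(\<Sum>j\<in>{1..k}. if y 0 = j \<and> T_gt n y then Q i j * G y else 0) = (if T_gt n y then Q i (y 0) * G y else 0)"
      by (rule sum_delta_traj[OF y])
    moreover have "T_gt n y \<Longrightarrow> Pmat R Q i (y 0) = Q i (y 0)"
      using traj_T_start[OF y] i by (auto simp: Pmat_def)
    ultimately show "(if T_gt n y then Pmat R Q i (y 0) * G y else 0) = (\<Sum>j\<in>{1..k}. if y 0 = j \<and> T_gt n y then Q i j * G y else 0)"
      by simp
  qed
  also have "\<dots> = (\<Sum>j\<in>{1..k}. \<Sum>y\<in>trajectories k n. if y 0 = j \<and> T_gt n y then Q i j * G y else 0)"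
    by (rule sum.swap)
  also have "\<dots> = (\<Sum>j\<in>{1..k}. Q i j * (\<Sum>y\<in>trajectories k n. if y 0 = j \<and> T_gt n y then G y else 0))"
    by (simp add: sum_distrib_left if_distrib cong: if_cong)
  finally show ?thesis .
qed

lemma first_step:
  assumes i: "i \<in> {1..k}"
  shows "(\<Sum>x\<in>trajectories k (Suc n). if x 0 = i \<and> T_gt (Suc n) x then F x else 0)
     = (\<Sum>y\<in>trajectories k n. if T_gt n y then F (cns i y) else 0)"
proof -
  have "(\<Sum>x\<in>trajectories k (Suc n). if x 0 = i \<and> T_gt (Suc n) x then F x else 0)
     = (\<Sum>a\<in>{0..k}. \<Sum>y\<in>trajectories k n. if a = i then (if T_gt n y then F (cns i y) else 0) else 0)"
    unfolding traj_Suc_sum using i by (intro sum.cong refl) (auto simp: T_gt_cns)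
  also have "\<dots> = (\<Sum>a\<in>{0..k}. if a = i then (\<Sum>y\<in>trajectories k n. if T_gt n y then F (cns i y) else 0) else 0)"
    by (intro sum.cong refl) (simp split: if_split)
  also have "\<dots> = (\<Sum>y\<in>trajectories k n. if T_gt n y then F (cns i y) else 0)"
    using i by (simp add: sum.delta)
  finally show ?thesis .
qed

lemma W_0: "i \<in> {1..k} \<Longrightarrow> W k R Q 0 i = 1"
proof -
  assume i: "i \<in> {1..k}"
  have "W k R Q 0 i = (\<Sum>a\<in>{0..k}. if a = i then 1 else 0)"
    unfolding W_def traj_0_sum using i by (intro sum.cong refl) (auto simp: T_gt_0)
  then show ?thesis using i by simp
qed

lemma W_Suc_aux: "i \<in> {1..k} \<Longrightarrow>
  W k R Q (Suc n) i = (\<Sum>y\<in>trajectories k n. if T_gt n y then Pmat R Q i (y 0) * PP R Q n y else 0)"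
  unfolding W_def by (subst first_step) (assumption, simp only: PP_cns)

lemma W_Suc: "i \<in> {1..k} \<Longrightarrow> W k R Q (Suc n) i = (\<Sum>j\<in>{1..k}. Q i j * W k R Q n j)"
  by (subst W_Suc_aux) (auto simp: step_sum W_def)

lemma card0: "card {m\<in>{0..0::nat}. x m = l} = (if x 0 = l then 1 else 0)"
proof -
  have "{m\<in>{0..0::nat}. x m = l} = (if x 0 = l then {0} else {})" by auto
  then show ?thesis by simp
qed

lemma card0': "card {m::nat. m = 0 \<and> x m = l} = (if x 0 = l then 1 else 0)"
  using card0[of x l] by simp

lemma card_cns': "card {m. m \<le> Suc n \<and> cns a y m = l} = (if a = l then 1 else 0) + card {m. m \<le> n \<and> y m = l}"
  using card_cns[of n a y l] by simp

lemma M_0: "i \<in> {1..k} \<Longrightarrow> M k R Q l 0 i = (if i = l then 1 else 0)"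
proof -
  assume i: "i \<in> {1..k}"
  have "M k R Q l 0 i = (\<Sum>a\<in>{0..k}. if a = i then (if i = l then 1 else 0) else 0)"
    unfolding M_def traj_0_sum using i by (intro sum.cong refl) (auto simp: T_gt_0 card0 card0')
  then show ?thesis using i by simp
qed

lemma M_Suc: "i \<in> {1..k} \<Longrightarrow>
  M k R Q l (Suc n) i = (\<Sum>j\<in>{1..k}. Q i j * M k R Q l n j) + (if i = l then W k R Q (Suc n) i else 0)"
proof -
  assume i: "i \<in> {1..k}"
  have "M k R Q l (Suc n) i = (\<Sum>y\<in>trajectories k n. if T_gt n y then
          Pmat R Q i (y 0) * (PP R Q n y * real (card {m\<in>{0..n}. y m = l}))
          + (if i = l then Pmat R Q i (y 0) * PP R Q n y else 0) else 0)"
    unfolding M_def using i by (subst first_step) (auto simp: PP_cns card_cns card_cns' algebra_simps intro!: sum.cong)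
  also have "\<dots> = (\<Sum>y\<in>trajectories k n. if T_gt n y then
          Pmat R Q i (y 0) * (PP R Q n y * real (card {m\<in>{0..n}. y m = l})) else 0)
        + (if i = l then (\<Sum>y\<in>trajectories k n. if T_gt n y then Pmat R Q i (y 0) * PP R Q n y else 0) else 0)"
    by (cases "i = l") (auto simp: sum.distrib[symmetric] intro!: sum.cong)
  also have "\<dots> = (\<Sum>j\<in>{1..k}. Q i j * M k R Q l n j) + (if i = l then W k R Q (Suc n) i else 0)"
    using i by (simp add: step_sum M_def W_Suc_aux)
  finally show ?thesis .
qed

lemma denom_eq:
  "(\<Sum>x\<in>trajectories k n. path_prob k \<pi> R Q n x * (if T_gt n x then 1 else 0))
     = (\<Sum>i\<in>{1..k}. \<pi> i * W k R Q n i)"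
proof -
  have "(\<Sum>x\<in>trajectories k n. path_prob k \<pi> R Q n x * (if T_gt n x then 1 else 0))
      = (\<Sum>x\<in>trajectories k n. \<Sum>i\<in>{1..k}. if x 0 = i \<and> T_gt n x then \<pi> i * PP R Q n x else 0)"
  proof (rule sum.cong[OF refl])
    fix x assume x: "x \<in> trajectories k n"
    show "path_prob k \<pi> R Q n x * (if T_gt n x then 1 else 0) = (\<Sum>i\<in>{1..k}. if x 0 = i \<and> T_gt n x then \<pi> i * PP R Q n x else 0)"
      unfolding sum_delta_traj[OF x] using traj_T_start[OF x]
      by (auto simp: path_prob_def init_def PP_def)
  qed
  also have "\<dots> = (\<Sum>i\<in>{1..k}. \<Sum>x\<in>trajectories k n. if x 0 = i \<and> T_gt n x then \<pi> i * PP R Q n x else 0)"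
    by (rule sum.swap)
  also have "\<dots> = (\<Sum>i\<in>{1..k}. \<pi> i * W k R Q n i)"
    by (simp add: W_def sum_distrib_left if_distrib cong: if_cong)
  finally show ?thesis .
qed

lemma numer_eq:
  "(\<Sum>x\<in>trajectories k n. path_prob k \<pi> R Q n x * (if T_gt n x then 1 else 0)
        * (real (card {m\<in>{0..n}. x m \<in> I_set l}) / real (n + 1)))
     = (\<Sum>i\<in>{1..k}. \<pi> i * M k R Q l n i) / real (n + 1)"
proof -
  have "(\<Sum>x\<in>trajectories k n. path_prob k \<pi> R Q n x * (if T_gt n x then 1 else 0)
        * (real (card {m\<in>{0..n}. x m \<in> I_set l}) / real (n + 1)))
      = (\<Sum>x\<in>trajectories k n. (\<Sum>i\<in>{1..k}. if x 0 = i \<and> T_gt n x then \<pi> i * (PP R Q n x * real (card {m\<in>{0..n}. x m = l})) else 0) / real (n + 1))"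
  proof (rule sum.cong[OF refl])
    fix x assume x: "x \<in> trajectories k n"
    show "path_prob k \<pi> R Q n x * (if T_gt n x then 1 else 0) * (real (card {m\<in>{0..n}. x m \<in> I_set l}) / real (n + 1))
       = (\<Sum>i\<in>{1..k}. if x 0 = i \<and> T_gt n x then \<pi> i * (PP R Q n x * real (card {m\<in>{0..n}. x m = l})) else 0) / real (n + 1)"
      unfolding sum_delta_traj[OF x] using traj_T_start[OF x]
      by (auto simp: path_prob_def init_def PP_def I_set_def)
  qed
  also have "\<dots> = (\<Sum>x\<in>trajectories k n. \<Sum>i\<in>{1..k}. if x 0 = i \<and> T_gt n x then \<pi> i * (PP R Q n x * real (card {m\<in>{0..n}. x m = l})) else 0) / real (n + 1)"
    by (rule sum_divide_distrib[symmetric])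
  also have "(\<Sum>x\<in>trajectories k n. \<Sum>i\<in>{1..k}. if x 0 = i \<and> T_gt n x then \<pi> i * (PP R Q n x * real (card {m\<in>{0..n}. x m = l})) else 0)
      = (\<Sum>i\<in>{1..k}. \<Sum>x\<in>trajectories k n. if x 0 = i \<and> T_gt n x then \<pi> i * (PP R Q n x * real (card {m\<in>{0..n}. x m = l})) else 0)"
    by (rule sum.swap)
  also have "\<dots> = (\<Sum>i\<in>{1..k}. \<pi> i * M k R Q l n i)"
    by (simp add: M_def sum_distrib_left if_distrib cong: if_cong)
  finally show ?thesis .
qed

definition PF :: "nat \<Rightarrow> (nat \<Rightarrow> nat \<Rightarrow> real) \<Rightarrow> nat \<Rightarrow> nat list set" where
  "PF k Q i = {th \<in> Paths k Q. hd th = i}"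

definition qp :: "(nat \<Rightarrow> nat \<Rightarrow> real) \<Rightarrow> nat list \<Rightarrow> real" where
  "qp Q th = (\<Prod>u<length th - 1. Q (th ! u) (th ! Suc u))"

definition rates :: "(nat \<Rightarrow> nat \<Rightarrow> real) \<Rightarrow> nat list \<Rightarrow> real list" where
  "rates Q th = map (rho Q) th"

definition JJ :: "(nat \<Rightarrow> nat \<Rightarrow> real) \<Rightarrow> nat \<Rightarrow> nat set" where
  "JJ Q i = {j \<in> {1..<i}. Q i j \<noteq> 0}"

lemma adm_single: "admissible k Q [i] \<longleftrightarrow> i \<in> {1..k}"
  by (auto simp: admissible_def)

lemma adm_cons: "admissible k Q (i # j # rest) \<longleftrightarrow>
   i \<in> {1..k} \<and> j < i \<and> Q i j \<noteq> 0 \<and> admissible k Q (j # rest)"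
proof
  assume a: "admissible k Q (i # j # rest)"
  have "Q i j \<noteq> 0" using a unfolding admissible_def by (metis length_Cons nth_Cons_0 nth_Cons_Suc zero_less_Suc Suc_less_eq)
  moreover have "\<forall>u. Suc u < length (j # rest) \<longrightarrow> Q ((j # rest) ! u) ((j # rest) ! Suc u) \<noteq> 0"
  proof (intro allI impI)
    fix u assume "Suc u < length (j # rest)"
    then have "Suc (Suc u) < length (i # j # rest)" by simp
    then have "Q ((i # j # rest) ! Suc u) ((i # j # rest) ! Suc (Suc u)) \<noteq> 0"
      using a unfolding admissible_def by blast
    then show "Q ((j # rest) ! u) ((j # rest) ! Suc u) \<noteq> 0" by simp
  qed
  ultimately show "i \<in> {1..k} \<and> j < i \<and> Q i j \<noteq> 0 \<and> admissible k Q (j # rest)"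
    using a unfolding admissible_def by auto
next
  assume a: "i \<in> {1..k} \<and> j < i \<and> Q i j \<noteq> 0 \<and> admissible k Q (j # rest)"
  have s: "sorted_wrt (>) (j # rest)" using a by (simp add: admissible_def)
  then have "\<forall>x\<in>set rest. x < i" using a by auto
  then have "sorted_wrt (>) (i # j # rest)" using a s by auto
  moreover have "\<forall>u. Suc u < length (i # j # rest) \<longrightarrow> Q ((i # j # rest) ! u) ((i # j # rest) ! Suc u) \<noteq> 0"
  proof (intro allI impI)
    fix u assume u: "Suc u < length (i # j # rest)"
    show "Q ((i # j # rest) ! u) ((i # j # rest) ! Suc u) \<noteq> 0"
    proof (cases u)
      case 0 then show ?thesis using a by simp
    next
      case (Suc v)
      then have "Suc v < length (j # rest)" using u by simp
      then have "Q ((j # rest) ! v) ((j # rest) ! Suc v) \<noteq> 0"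
        using a unfolding admissible_def by blast
      then show ?thesis using Suc by simp
    qed
  qed
  ultimately show "admissible k Q (i # j # rest)" using a unfolding admissible_def by auto
qed

lemma adm_le_hd: "admissible k Q th \<Longrightarrow> x \<in> set th \<Longrightarrow> x \<le> hd th"
  by (cases th) (auto simp: admissible_def)

lemma adm_set: "admissible k Q th \<Longrightarrow> set th \<subseteq> {1..k}"
  by (simp add: admissible_def)

lemma finite_Paths: "finite (Paths k Q)"
proof -
  have "Paths k Q \<subseteq> {xs. set xs \<subseteq> {1..k} \<and> length xs \<le> k}"
  proof
    fix th assume "th \<in> Paths k Q"
    then have a: "admissible k Q th" by (simp add: Paths_def)
    then have "sorted_wrt (<) (rev th)" by (simp add: admissible_def sorted_wrt_rev)
    then have "distinct th" by (metis distinct_rev strict_sorted_iff)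
    then have "length th = card (set th)" by (simp add: distinct_card)
    also have "\<dots> \<le> card {1..k}" using adm_set[OF a] by (intro card_mono) auto
    finally show "th \<in> {xs. set xs \<subseteq> {1..k} \<and> length xs \<le> k}" using adm_set[OF a] by simp
  qed
  moreover have "finite {xs. set xs \<subseteq> {1..k} \<and> length xs \<le> k}"
    by (rule finite_lists_length_le) simp
  ultimately show ?thesis by (rule finite_subset)
qed

lemma finite_PF[simp]: "finite (PF k Q i)"
  using finite_Paths by (simp add: PF_def)

lemma PF_nonempty: "th \<in> PF k Q i \<Longrightarrow> th \<noteq> []"
  by (simp add: PF_def Paths_def admissible_def)

lemma PF_decomp:
  assumes i: "i \<in> {1..k}"
  shows "PF k Q i = insert [i] (\<Union>j\<in>JJ Q i. (#) i ` PF k Q j)"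
proof (rule set_eqI)
  fix th
  show "th \<in> PF k Q i \<longleftrightarrow> th \<in> insert [i] (\<Union>j\<in>JJ Q i. (#) i ` PF k Q j)"
  proof
    assume th: "th \<in> PF k Q i"
    then obtain t where t: "th = i # t" using PF_nonempty by (cases th) (auto simp: PF_def)
    show "th \<in> insert [i] (\<Union>j\<in>JJ Q i. (#) i ` PF k Q j)"
    proof (cases t)
      case Nil then show ?thesis using t by simp
    next
      case (Cons j rest)
      have a: "admissible k Q (i # j # rest)" using th t Cons by (simp add: PF_def Paths_def)
      then have "admissible k Q (j # rest)" by (simp add: adm_cons)
      then have "set (j # rest) \<subseteq> {1..k}" by (rule adm_set)
      then have "j \<ge> 1" by auto
      then have "j \<in> JJ Q i" "t \<in> PF k Q j" using a Cons by (auto simp: adm_cons JJ_def PF_def Paths_def)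
      then show ?thesis using t by blast
    qed
  next
    assume "th \<in> insert [i] (\<Union>j\<in>JJ Q i. (#) i ` PF k Q j)"
    then show "th \<in> PF k Q i"
    proof
      assume "th = [i]" then show ?thesis using i by (simp add: PF_def Paths_def adm_single)
    next
      assume "th \<in> (\<Union>j\<in>JJ Q i. (#) i ` PF k Q j)"
      then obtain j t where j: "j \<in> JJ Q i" "t \<in> PF k Q j" "th = i # t" by blast
      then obtain rest where "t = j # rest" using PF_nonempty by (cases t) (auto simp: PF_def)
      then show ?thesis using j i by (auto simp: PF_def Paths_def adm_cons JJ_def)
    qed
  qed
qed

lemma finite_JJ[simp]: "finite (JJ Q i)" by (simp add: JJ_def)

lemma sum_PF:
  assumes i: "i \<in> {1..k}"
  shows "(\<Sum>th\<in>PF k Q i. F th) = F [i] + (\<Sum>j\<in>JJ Q i. \<Sum>th\<in>PF k Q j. F (i # th))"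
proof -
  have nin: "[i] \<notin> (\<Union>j\<in>JJ Q i. (#) i ` PF k Q j)" using PF_nonempty by blast
  have "(\<Sum>th\<in>PF k Q i. F th) = F [i] + (\<Sum>th\<in>(\<Union>j\<in>JJ Q i. (#) i ` PF k Q j). F th)"
    unfolding PF_decomp[OF i] using nin by (simp add: sum.insert)
  also have "(\<Sum>th\<in>(\<Union>j\<in>JJ Q i. (#) i ` PF k Q j). F th) = (\<Sum>j\<in>JJ Q i. \<Sum>th\<in>(#) i ` PF k Q j. F th)"
  proof (rule sum.UNION_disjoint)
    show "\<forall>j\<in>JJ Q i. \<forall>j'\<in>JJ Q i. j \<noteq> j' \<longrightarrow> (#) i ` PF k Q j \<inter> (#) i ` PF k Q j' = {}"
      by (auto simp: PF_def)
  qed auto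
  also have "\<dots> = (\<Sum>j\<in>JJ Q i. \<Sum>th\<in>PF k Q j. F (i # th))"
  proof (rule sum.cong[OF refl])
    fix j
    have "inj_on ((#) i) (PF k Q j)" by (simp add: inj_on_def)
    then show "(\<Sum>th\<in>(#) i ` PF k Q j. F th) = (\<Sum>th\<in>PF k Q j. F (i # th))"
      by (simp add: sum.reindex)
  qed
  finally show ?thesis .
qed

lemma qp_single[simp]: "qp Q [i] = 1" by (simp add: qp_def)

lemma qp_cons: "t \<noteq> [] \<Longrightarrow> qp Q (i # t) = Q i (hd t) * qp Q t"
proof -
  assume t: "t \<noteq> []"
  then obtain m where m: "length t = Suc m" by (cases t) auto
  have "qp Q (i # t) = (\<Prod>u<Suc m. Q ((i # t) ! u) ((i # t) ! Suc u))" using m by (simp add: qp_def)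
  also have "\<dots> = Q i (t ! 0) * (\<Prod>u<m. Q (t ! u) (t ! Suc u))"
    by (subst prod.lessThan_Suc_shift) simp
  also have "\<dots> = Q i (hd t) * qp Q t" using t m by (simp add: qp_def hd_conv_nth)
  finally show ?thesis .
qed

lemma rates_cons[simp]: "rates Q (i # t) = rho Q i # rates Q t" by (simp add: rates_def)
lemma rates_nil[simp]: "rates Q [] = []" by (simp add: rates_def)

lemma PF_hd: "t \<in> PF k Q j \<Longrightarrow> hd t = j" by (simp add: PF_def)

lemma row_split:
  assumes i: "i \<in> {1..k}" and lt: "lower_triangular k Q"
  shows "(\<Sum>j\<in>{1..k}. Q i j * f j) = Q i i * f i + (\<Sum>j\<in>JJ Q i. Q i j * f j)"
proof -
  have sp: "{1..k} = insert i ({1..<i} \<union> {Suc i..k})" using i by auto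
  have "(\<Sum>j\<in>{1..k}. Q i j * f j) = Q i i * f i + (\<Sum>j\<in>{1..<i} \<union> {Suc i..k}. Q i j * f j)"
    unfolding sp by (subst sum.insert) auto
  also have "(\<Sum>j\<in>{1..<i} \<union> {Suc i..k}. Q i j * f j) = (\<Sum>j\<in>{1..<i}. Q i j * f j) + (\<Sum>j\<in>{Suc i..k}. Q i j * f j)"
    by (rule sum.union_disjoint) auto
  also have "(\<Sum>j\<in>{Suc i..k}. Q i j * f j) = 0"
    using lt i by (intro sum.neutral) (auto simp: lower_triangular_def)
  also have "(\<Sum>j\<in>{1..<i}. Q i j * f j) = (\<Sum>j\<in>JJ Q i. Q i j * f j)"
    by (rule sum.mono_neutral_right) (auto simp: JJ_def)
  finally show ?thesis by simp
qed

lemma JJ_sub: "i \<in> {1..k} \<Longrightarrow> j \<in> JJ Q i \<Longrightarrow> j \<in> {1..k}"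
  by (auto simp: JJ_def)

lemma rates_eq_Nil[simp]: "rates Q t = [] \<longleftrightarrow> t = []" by (simp add: rates_def)

lemma gg_step2: "gg (a # b # rs) (Suc m) = b * gg (a # b # rs) m + gg (a # rs) m"
  using gg_swap[of a b rs] by (metis gg.simps(3))

lemma PF_cons: "th \<in> PF k Q i \<Longrightarrow> th = i # tl th"
  using PF_nonempty PF_hd by (metis list.collapse)

lemma W_paths:
  assumes lt: "lower_triangular k Q"
  shows "i \<in> {1..k} \<Longrightarrow> W k R Q n i = (\<Sum>th\<in>PF k Q i. qp Q th * gg (rates Q th) n)"
proof (induction n arbitrary: i)
  case 0
  have "(\<Sum>th\<in>PF k Q i. qp Q th * gg (rates Q th) 0) = 1"
    unfolding sum_PF[OF 0] using PF_nonempty by (auto intro!: sum.neutral)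
  then show ?case using W_0[OF 0] by simp
next
  case (Suc n)
  define r where "r = rho Q i"
  have r: "r = Q i i" by (simp add: r_def rho_def)
  have "W k R Q (Suc n) i = Q i i * W k R Q n i + (\<Sum>j\<in>JJ Q i. Q i j * W k R Q n j)"
    using W_Suc[OF Suc.prems] row_split[OF Suc.prems lt] by simp
  also have "\<dots> = r * (\<Sum>th\<in>PF k Q i. qp Q th * gg (rates Q th) n)
      + (\<Sum>j\<in>JJ Q i. Q i j * (\<Sum>th\<in>PF k Q j. qp Q th * gg (rates Q th) n))"
    using Suc.IH[OF Suc.prems] Suc.IH[OF JJ_sub[OF Suc.prems]] r by simp
  also have "\<dots> = (\<Sum>th\<in>PF k Q i. qp Q th * gg (rates Q th) (Suc n))"
  proof -
    have a: "(\<Sum>th\<in>PF k Q i. qp Q th * gg (rates Q th) (Suc n))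
        = r * gg [r] n + (\<Sum>j\<in>JJ Q i. \<Sum>t\<in>PF k Q j. r * (Q i j * qp Q t * gg (r # rates Q t) n) + Q i j * (qp Q t * gg (rates Q t) n))"
      unfolding sum_PF[OF Suc.prems]
      by (intro arg_cong2[where f="(+)"] sum.cong refl)
         (auto simp: r_def qp_cons PF_nonempty PF_hd algebra_simps)
    have b: "(\<Sum>th\<in>PF k Q i. qp Q th * gg (rates Q th) n)
        = gg [r] n + (\<Sum>j\<in>JJ Q i. \<Sum>t\<in>PF k Q j. Q i j * qp Q t * gg (r # rates Q t) n)"
      unfolding sum_PF[OF Suc.prems]
      by (intro arg_cong2[where f="(+)"] sum.cong refl)
         (auto simp: r_def qp_cons PF_nonempty PF_hd algebra_simps)
    show ?thesis unfolding a b
      by (simp add: sum.distrib sum_distrib_left algebra_simps)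
  qed
  finally show ?case .
qed

lemma PF_notin: "t \<in> PF k Q j \<Longrightarrow> j < l \<Longrightarrow> l \<notin> set t"
  using adm_le_hd[of k Q t l] by (force simp: PF_def Paths_def)

lemma M_paths:
  assumes lt: "lower_triangular k Q"
  shows "i \<in> {1..k} \<Longrightarrow> M k R Q l n i =
     (\<Sum>th\<in>PF k Q i. if l \<in> set th then qp Q th * gg (rho Q l # rates Q th) (Suc n) else 0)"
proof (induction n arbitrary: i)
  case 0
  have "(\<Sum>th\<in>PF k Q i. if l \<in> set th then qp Q th * gg (rho Q l # rates Q th) (Suc 0) else 0)
      = (if i = l then 1 else 0)"
    unfolding sum_PF[OF 0] using PF_nonempty by (auto intro!: sum.neutral)
  then show ?case using M_0[OF 0] by simp
next
  case (Suc n)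
  define r where "r = rho Q i"
  have r: "r = Q i i" by (simp add: r_def rho_def)
  define F where "F m th = (if l \<in> set th then qp Q th * gg (rho Q l # rates Q th) (Suc m) else 0)" for m th
  define G where "G th = (if l \<in> set th then qp Q th * gg (rho Q l # rates Q (tl th)) (Suc n) else 0)" for th
  have FS: "F (Suc n) th = r * F n th + G th" if "th \<in> PF k Q i" for th
  proof -
    have "rates Q th = r # rates Q (tl th)" using PF_cons[OF that] r_def
      by (metis rates_cons)
    then show ?thesis unfolding F_def G_def
      using gg_step2[of "rho Q l" r "rates Q (tl th)" "Suc n"] by (simp del: gg.simps add: algebra_simps)
  qed
  have IH: "M k R Q l n j = (\<Sum>th\<in>PF k Q j. F n th)" if "j \<in> {1..k}" for j
    using Suc.IH[OF that] by (simp add: F_def)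
  have "M k R Q l (Suc n) i = Q i i * M k R Q l n i + (\<Sum>j\<in>JJ Q i. Q i j * M k R Q l n j)
      + (if i = l then W k R Q (Suc n) i else 0)"
    using M_Suc[OF Suc.prems] row_split[OF Suc.prems lt] by simp
  also have "\<dots> = r * (\<Sum>th\<in>PF k Q i. F n th) + (\<Sum>j\<in>JJ Q i. Q i j * (\<Sum>th\<in>PF k Q j. F n th))
      + (if i = l then (\<Sum>th\<in>PF k Q i. qp Q th * gg (rates Q th) (Suc n)) else 0)"
    using IH[OF Suc.prems] IH[OF JJ_sub[OF Suc.prems]] r W_paths[OF lt Suc.prems, of R "Suc n"]
    by (cases "i = l") simp_all
  also have "\<dots> = r * (\<Sum>th\<in>PF k Q i. F n th) + (\<Sum>th\<in>PF k Q i. G th)"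
  proof (cases "i = l")
    case True
    have z: "(\<Sum>th\<in>PF k Q j. F n th) = 0" if "j \<in> JJ Q i" for j
      using that True PF_notin[of _ k Q j l] by (intro sum.neutral) (auto simp: F_def JJ_def)
    have "(\<Sum>th\<in>PF k Q i. G th) = (\<Sum>th\<in>PF k Q i. qp Q th * gg (rates Q th) (Suc n))"
    proof (rule sum.cong[OF refl])
      fix th assume th: "th \<in> PF k Q i"
      have "th = l # tl th" using PF_cons[OF th] True by simp
      then show "G th = qp Q th * gg (rates Q th) (Suc n)"
        unfolding G_def by (metis list.set_intros(1) rates_cons)
    qed
    then show ?thesis using z True by simp
  next
    case False
    have "(\<Sum>th\<in>PF k Q i. G th) = (\<Sum>j\<in>JJ Q i. Q i j * (\<Sum>th\<in>PF k Q j. F n th))"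
      unfolding sum_PF[OF Suc.prems] sum_distrib_left
      using False by (auto simp: G_def F_def qp_cons PF_nonempty PF_hd intro!: sum.cong)
    then show ?thesis using False by simp
  qed
  also have "\<dots> = (\<Sum>th\<in>PF k Q i. F (Suc n) th)"
    using FS by (simp add: sum.distrib sum_distrib_left)
  finally show ?case by (simp add: F_def)
qed

lemma gg_asym_gen:
  fixes rs :: "real list"
  assumes ne: "rs \<noteq> []" and pos: "\<forall>r\<in>set rs. r > 0"
  defines "\<rho> \<equiv> Max (set rs)" and "h \<equiv> length (filter (\<lambda>x. x = Max (set rs)) rs)"
  shows "(\<lambda>n. gg rs n / (real (n choose (h - 1)) * \<rho> ^ n))
     \<longlonglongrightarrow> prod_list (map (\<lambda>r. 1 / (\<rho> - r)) (filter (\<lambda>x. x < \<rho>) rs)) / \<rho> ^ (h - 1)"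
proof -
  have rin: "\<rho> \<in> set rs" using ne by (simp add: \<rho>_def)
  have le: "x \<le> \<rho>" if "x \<in> set rs" for x using that by (simp add: \<rho>_def)
  have rpos: "\<rho> > 0" using rin pos by auto
  have h1: "h \<ge> 1" using rin unfolding h_def \<rho>_def[symmetric]
    by (metis (mono_tags, lifting) One_nat_def Suc_leI filter_empty_conv length_greater_0_conv)
  have f: "filter (\<lambda>x. \<not> x < \<rho>) rs = replicate h \<rho>"
  proof -
    have "filter (\<lambda>x. \<not> x < \<rho>) rs = filter (\<lambda>x. x = \<rho>) rs"
      using le by (intro filter_cong refl) force
    then show ?thesis using filter_eq_replicate[of \<rho> rs] by (simp add: h_def \<rho>_def)
  qed
  have g: "gg rs = gg (filter (\<lambda>x. x < \<rho>) rs @ replicate h \<rho>)"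
    using gg_filter[of rs "\<lambda>x. x < \<rho>"] f by simp
  show ?thesis unfolding g
    by (rule gg_asym[OF h1 rpos]) (use pos in auto)
qed

lemma prod_filter_nth:
  "prod_list (map g (filter P xs)) = (\<Prod>u\<in>{u. u < length xs \<and> P (xs ! u)}. g (xs ! u))"
proof -
  have "prod_list (map g (filter P xs)) = (\<Prod>u<length xs. if P (xs ! u) then g (xs ! u) else 1)"
    by (induction xs) (simp_all add: prod.lessThan_Suc_shift del: prod.lessThan_Suc cong: if_cong)
  also have "\<dots> = (\<Prod>u\<in>{u\<in>{..<length xs}. P (xs ! u)}. g (xs ! u))"
    by (rule prod.inter_filter[symmetric]) simp
  finally show ?thesis by simp
qed

lemma rho_path_rates: "rho_path Q th = Max (set (rates Q th))"
proof -
  have "(\<lambda>u. rho Q (th ! u)) ` {..<length th} = set (rates Q th)"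
    by (auto simp: rates_def in_set_conv_nth image_iff) (use nth_mem in blast)
  then show ?thesis by (simp add: rho_path_def)
qed

lemma hplus_rates: "hplus Q th = length (filter (\<lambda>x. x = rho_path Q th) (rates Q th))"
  unfolding hplus_def Hplus_def length_filter_conv_card rates_def by (rule arg_cong[where f=card]) auto

lemma Hminus_prod: "(\<Prod>u\<in>Hminus Q th. g (rho Q (th ! u)))
   = prod_list (map g (filter (\<lambda>x. x < rho_path Q th) (rates Q th)))"
  unfolding prod_filter_nth Hminus_def rates_def by (intro prod.cong) auto

lemma Paths_ne: "th \<in> Paths k Q \<Longrightarrow> th \<noteq> []"
  by (simp add: Paths_def admissible_def)

lemma Paths_set: "th \<in> Paths k Q \<Longrightarrow> set th \<subseteq> {1..k}"
  by (simp add: Paths_def admissible_def)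

lemma rates_pos:
  assumes "th \<in> Paths k Q" "\<And>i. i \<in> {1..k} \<Longrightarrow> Q i i > 0"
  shows "\<forall>r\<in>set (rates Q th). r > 0"
  using assms Paths_set[OF assms(1)] by (auto simp: rates_def rho_def)

lemma rho_path_le:
  assumes "th \<in> Paths k Q"
  shows "rho_path Q th \<le> rho_max k Q"
proof -
  have "set (rates Q th) \<subseteq> rho Q ` {1..k}" using Paths_set[OF assms] by (auto simp: rates_def)
  moreover have "set (rates Q th) \<noteq> {}" using Paths_ne[OF assms] by (simp add: rates_def)
  ultimately show ?thesis unfolding rho_path_rates rho_max_def by (intro Max_mono) auto
qed

lemma rho_path_in: "th \<in> Paths k Q \<Longrightarrow> rho_path Q th \<in> set (rates Q th)"
  unfolding rho_path_rates using Paths_ne by (simp add: rates_def)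

lemma hplus_pos: "th \<in> Paths k Q \<Longrightarrow> hplus Q th \<ge> 1"
  unfolding hplus_rates using rho_path_in
  by (metis (mono_tags, lifting) One_nat_def Suc_leI filter_empty_conv length_greater_0_conv)

lemma hplus_le:
  assumes "th \<in> Paths k Q" "rho_path Q th = rho_max k Q"
  shows "hplus Q th \<le> hplus_max k Q"
proof -
  have e: "{hplus Q th |th. th \<in> Paths k Q \<and> rho_path Q th = rho_max k Q} = hplus Q ` {th\<in>Paths k Q. rho_path Q th = rho_max k Q}"
    by auto
  show ?thesis unfolding hplus_max_def e using assms finite_Paths by (intro Max_ge) auto
qed

lemma LD:
  assumes th: "th \<in> Paths k Q" and diag: "\<And>i. i \<in> {1..k} \<Longrightarrow> Q i i > 0"
  defines "H \<equiv> hplus_max k Q" and "\<rho> \<equiv> rho_max k Q"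
  shows "(\<lambda>n. gg (rates Q th) n / (real (n choose (H - 1)) * \<rho> ^ n))
    \<longlonglongrightarrow> (if th \<in> Paths_max k Q then
         prod_list (map (\<lambda>r. 1 / (\<rho> - r)) (filter (\<lambda>x. x < \<rho>) (rates Q th))) / \<rho> ^ (H - 1) else 0)"
proof -
  define rt where "rt = rho_path Q th"
  define ht where "ht = hplus Q th"
  have pos: "\<forall>r\<in>set (rates Q th). r > 0" by (rule rates_pos[OF th diag])
  have ne: "rates Q th \<noteq> []" using Paths_ne[OF th] by simp
  have A: "(\<lambda>n. gg (rates Q th) n / (real (n choose (ht - 1)) * rt ^ n))
     \<longlonglongrightarrow> prod_list (map (\<lambda>r. 1 / (rt - r)) (filter (\<lambda>x. x < rt) (rates Q th))) / rt ^ (ht - 1)"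
    using gg_asym_gen[OF ne pos] by (simp add: rt_def ht_def rho_path_rates hplus_rates)
  have rtpos: "rt > 0" using pos rho_path_in[OF th] by (auto simp: rt_def)
  have rtle: "rt \<le> \<rho>" using rho_path_le[OF th] by (simp add: rt_def \<rho>_def)
  show ?thesis
  proof (cases "th \<in> Paths_max k Q")
    case True
    then have "rt = \<rho>" "ht = H" by (auto simp: Paths_max_def rt_def ht_def \<rho>_def H_def)
    then show ?thesis using A True by simp
  next
    case False
    have "ht - 1 < H - 1 \<or> rt < \<rho>"
    proof (cases "rt = \<rho>")
      case True
      then have "ht \<le> H" using hplus_le[OF th] by (simp add: rt_def \<rho>_def ht_def H_def)
      moreover have "ht \<noteq> H" using False True th by (auto simp: Paths_max_def rt_def \<rho>_def ht_def H_def)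
      moreover have "ht \<ge> 1" using hplus_pos[OF th] by (simp add: ht_def)
      ultimately show ?thesis by (intro disjI1) linarith
    qed (use rtle in simp)
    then have B: "(\<lambda>n. real (n choose (ht - 1)) * rt ^ n / (real (n choose (H - 1)) * \<rho> ^ n)) \<longlonglongrightarrow> 0"
      by (intro binom_compare rtpos rtle)
    have "(\<lambda>n. gg (rates Q th) n / (real (n choose (ht - 1)) * rt ^ n) *
             (real (n choose (ht - 1)) * rt ^ n / (real (n choose (H - 1)) * \<rho> ^ n)))
         \<longlonglongrightarrow> prod_list (map (\<lambda>r. 1 / (rt - r)) (filter (\<lambda>x. x < rt) (rates Q th))) / rt ^ (ht - 1) * 0"
      by (rule tendsto_mult[OF A B])
    moreover have "eventually (\<lambda>n. gg (rates Q th) n / (real (n choose (ht - 1)) * rt ^ n) *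
             (real (n choose (ht - 1)) * rt ^ n / (real (n choose (H - 1)) * \<rho> ^ n))
          = gg (rates Q th) n / (real (n choose (H - 1)) * \<rho> ^ n)) sequentially"
      using eventually_ge_at_top[of "ht - 1"]
    proof eventually_elim
      case (elim n)
      then have "real (n choose (ht - 1)) * rt ^ n \<noteq> 0" using rtpos by simp
      then show ?case by simp
    qed
    ultimately show ?thesis using False by (simp add: Lim_transform_eventually)
  qed
qed

lemma LN:
  assumes th: "th \<in> Paths k Q" and lin: "l \<in> set th" and diag: "\<And>i. i \<in> {1..k} \<Longrightarrow> Q i i > 0"
    and Hpos: "hplus_max k Q \<ge> 1"
  defines "H \<equiv> hplus_max k Q" and "\<rho> \<equiv> rho_max k Q"
  shows "(\<lambda>n. gg (rho Q l # rates Q th) (Suc n) / (real (n + 1) * (real (n choose (H - 1)) * \<rho> ^ n)))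
    \<longlonglongrightarrow> (if th \<in> Paths_max k Q \<and> rho Q l = \<rho> then
         prod_list (map (\<lambda>r. 1 / (\<rho> - r)) (filter (\<lambda>x. x < \<rho>) (rates Q th))) / \<rho> ^ (H - 1) / real H else 0)"
proof -
  define rt where "rt = rho_path Q th"
  define ht where "ht = hplus Q th"
  define rl where "rl = rho Q l"
  define xs where "xs = rl # rates Q th"
  define h' where "h' = length (filter (\<lambda>x. x = rt) xs)"
  have pos: "\<forall>r\<in>set xs. r > 0" using rates_pos[OF th diag] lin by (auto simp: xs_def rates_def rl_def)
  have rlin: "rl \<in> set (rates Q th)" using lin by (simp add: rl_def rates_def)
  have maxxs: "Max (set xs) = rt"
  proof -
    have "set xs = set (rates Q th)" using rlin by (auto simp: xs_def)
    then show ?thesis by (simp add: rt_def rho_path_rates)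
  qed
  have h'eq: "h' = ht + (if rl = rt then 1 else 0)"
    by (simp add: h'_def xs_def ht_def hplus_rates rt_def)
  have A: "(\<lambda>m. gg xs m / (real (m choose (h' - 1)) * rt ^ m))
     \<longlonglongrightarrow> prod_list (map (\<lambda>r. 1 / (rt - r)) (filter (\<lambda>x. x < rt) xs)) / rt ^ (h' - 1)"
    using gg_asym_gen[OF _ pos] unfolding maxxs h'_def[symmetric] by (simp add: xs_def)
  then have A': "(\<lambda>n. gg xs (Suc n) / (real (Suc n choose (h' - 1)) * rt ^ Suc n))
     \<longlonglongrightarrow> prod_list (map (\<lambda>r. 1 / (rt - r)) (filter (\<lambda>x. x < rt) xs)) / rt ^ (h' - 1)"
    by (rule LIMSEQ_Suc)
  have rtpos: "rt > 0" using rates_pos[OF th diag] rho_path_in[OF th] by (auto simp: rt_def)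
  have rtle: "rt \<le> \<rho>" using rho_path_le[OF th] by (simp add: rt_def \<rho>_def)
  have rpos: "\<rho> > 0" using rtpos rtle by simp
  have rlle: "rl \<le> rt" using rlin by (simp add: rt_def rho_path_rates)
  have H1: "H \<ge> 1" using Hpos by (simp add: H_def)
  have denom: "real (n + 1) * (real (n choose (H - 1)) * \<rho> ^ n) = real H * real (Suc n choose H) * \<rho> ^ n" for n
  proof -
    have "Suc n * (n choose (H - 1)) = (Suc n choose H) * H"
      using Suc_times_binomial_eq[of n "H - 1"] H1 by simp
    then have "real (Suc n) * real (n choose (H - 1)) = real (Suc n choose H) * real H"
      by (metis of_nat_mult)
    then show ?thesis by (simp add: algebra_simps)
  qed
  define mid where "mid m = real (m choose (h' - 1)) * rt ^ m / (real (m choose H) * \<rho> ^ m)" for m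
  have factEq: "eventually (\<lambda>n. gg xs (Suc n) / (real (Suc n choose (h' - 1)) * rt ^ Suc n) * mid (Suc n) * (\<rho> / real H)
      = gg (rho Q l # rates Q th) (Suc n) / (real (n + 1) * (real (n choose (H - 1)) * \<rho> ^ n))) sequentially"
    using eventually_ge_at_top[of "h'"]
  proof eventually_elim
    case (elim n)
    then have nz: "real (Suc n choose (h' - 1)) * rt ^ Suc n \<noteq> 0" using rtpos by simp
    show ?case unfolding denom mid_def using nz rpos H1
      by (simp add: xs_def rl_def field_simps del: gg.simps)
  qed
  show ?thesis
  proof (cases "th \<in> Paths_max k Q \<and> rho Q l = \<rho>")
    case True
    then have e: "rt = \<rho>" "ht = H" "rl = \<rho>" by (auto simp: Paths_max_def rt_def \<rho>_def ht_def H_def rl_def)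
    then have h': "h' = Suc H" using h'eq by simp
    have mid1: "eventually (\<lambda>n. mid (Suc n) = 1) sequentially"
      using eventually_ge_at_top[of H]
    proof eventually_elim
      case (elim n)
      then show ?case using rpos by (simp add: mid_def e h')
    qed
    have L: "(\<lambda>n. gg xs (Suc n) / (real (Suc n choose (h' - 1)) * rt ^ Suc n) * mid (Suc n) * (\<rho> / real H))
       \<longlonglongrightarrow> prod_list (map (\<lambda>r. 1 / (rt - r)) (filter (\<lambda>x. x < rt) xs)) / rt ^ (h' - 1) * 1 * (\<rho> / real H)"
      by (intro tendsto_mult A' tendsto_const Lim_transform_eventually[OF tendsto_const mid1[THEN eventually_mono]]) auto
    have E: "prod_list (map (\<lambda>r. 1 / (rt - r)) (filter (\<lambda>x. x < rt) xs)) / rt ^ (h' - 1) * 1 * (\<rho> / real H)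
       = prod_list (map (\<lambda>r. 1 / (\<rho> - r)) (filter (\<lambda>x. x < \<rho>) (rates Q th))) / \<rho> ^ (H - 1) / real H"
    proof -
      have "\<rho> ^ H = \<rho> * \<rho> ^ (H - 1)" using H1 by (metis Suc_diff_le diff_Suc_1 power_Suc)
      then show ?thesis using rpos H1 by (simp add: e h' xs_def field_simps)
    qed
    show ?thesis
      by (subst if_P[OF True], rule Lim_transform_eventually[OF _ factEq], rule tendsto_cong_limit[OF L E[symmetric]])
  next
    case False
    have cond: "h' - 1 < H \<or> rt < \<rho>"
    proof (cases "rt = \<rho>")
      case True
      then have "ht \<le> H" using hplus_le[OF th] by (simp add: rt_def \<rho>_def ht_def H_def)
      show ?thesis
      proof (cases "th \<in> Paths_max k Q")
        case True2: True
        then have "ht = H" by (simp add: Paths_max_def ht_def H_def)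
        moreover have "rl \<noteq> rt" using False True2 True by (simp add: rl_def)
        ultimately show ?thesis using h'eq H1 by simp
      next
        case False2: False
        then have "ht \<noteq> H" using th True by (auto simp: Paths_max_def rt_def \<rho>_def ht_def H_def)
        then show ?thesis using h'eq \<open>ht \<le> H\<close> by (intro disjI1) (simp split: if_splits)
      qed
    qed (use rtle in simp)
    have B: "mid \<longlonglongrightarrow> 0" unfolding mid_def by (intro binom_compare rtpos rtle cond)
    have L: "(\<lambda>n. gg xs (Suc n) / (real (Suc n choose (h' - 1)) * rt ^ Suc n) * mid (Suc n) * (\<rho> / real H))
       \<longlonglongrightarrow> prod_list (map (\<lambda>r. 1 / (rt - r)) (filter (\<lambda>x. x < rt) xs)) / rt ^ (h' - 1) * 0 * (\<rho> / real H)"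
      by (intro tendsto_mult A' tendsto_const LIMSEQ_Suc[OF B])
    show ?thesis
      by (subst if_not_P[OF False], rule Lim_transform_eventually[OF _ factEq], rule tendsto_cong_limit[OF L]) simp
  qed
qed

lemma regroup:
  fixes \<pi> :: "nat \<Rightarrow> real" and f :: "nat list \<Rightarrow> real"
  shows "(\<Sum>i\<in>{1..k}. \<pi> i * (\<Sum>th\<in>PF k Q i. f th)) = (\<Sum>th\<in>Paths k Q. \<pi> (hd th) * f th)"
proof -
  have sub: "hd ` Paths k Q \<subseteq> {1..k}"
  proof
    fix x assume "x \<in> hd ` Paths k Q"
    then obtain th where "th \<in> Paths k Q" "x = hd th" by blast
    then show "x \<in> {1..k}" using Paths_set Paths_ne by (metis hd_in_set subsetD)
  qed
  have "(\<Sum>th\<in>Paths k Q. \<pi> (hd th) * f th) = (\<Sum>i\<in>{1..k}. \<Sum>th\<in>{th. th \<in> Paths k Q \<and> hd th = i}. \<pi> (hd th) * f th)"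
    using sum.group[OF finite_Paths finite_atLeastAtMost sub, of "\<lambda>th. \<pi> (hd th) * f th"] by simp
  also have "\<dots> = (\<Sum>i\<in>{1..k}. \<pi> i * (\<Sum>th\<in>PF k Q i. f th))"
  proof (rule sum.cong[OF refl])
    fix i
    have "(\<Sum>th\<in>{th. th \<in> Paths k Q \<and> hd th = i}. \<pi> (hd th) * f th) = (\<Sum>th\<in>PF k Q i. \<pi> i * f th)"
      by (rule sum.cong) (auto simp: PF_def)
    then show "(\<Sum>th\<in>{th. th \<in> Paths k Q \<and> hd th = i}. \<pi> (hd th) * f th) = \<pi> i * (\<Sum>th\<in>PF k Q i. f th)"
      by (simp add: sum_distrib_left)
  qed
  finally show ?thesis by simp
qed

lemma sum_if_sub:
  assumes "finite A" "B \<subseteq> A"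
  shows "(\<Sum>x\<in>A. if x \<in> B then f x else 0) = (\<Sum>x\<in>B. f x)"
proof -
  have "(\<Sum>x\<in>A. if x \<in> B then f x else 0) = (\<Sum>x\<in>{x\<in>A. x \<in> B}. f x)"
    by (rule sum.inter_filter[symmetric]) (rule assms)
  also have "{x\<in>A. x \<in> B} = B" using assms by auto
  finally show ?thesis .
qed

lemma qp_nonneg:
  assumes "th \<in> Paths k Q" "\<And>i j. i \<in> {1..k} \<Longrightarrow> j \<in> {1..k} \<Longrightarrow> Q i j \<ge> 0"
  shows "qp Q th \<ge> 0"
  unfolding qp_def
proof (rule prod_nonneg)
  fix u assume "u \<in> {..<length th - 1}"
  then have "th ! u \<in> set th" "th ! Suc u \<in> set th" by auto
  then have "th ! u \<in> {1..k}" "th ! Suc u \<in> {1..k}" using Paths_set[OF assms(1)] by auto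
  then show "0 \<le> Q (th ! u) (th ! Suc u)" using assms(2) by blast
qed

lemma qp_pos:
  assumes "th \<in> Paths k Q" "\<And>i j. i \<in> {1..k} \<Longrightarrow> j \<in> {1..k} \<Longrightarrow> Q i j \<ge> 0"
  shows "qp Q th > 0"
  unfolding qp_def
proof (rule prod_pos)
  fix u assume "u \<in> {..<length th - 1}"
  then have "th ! u \<in> set th" "th ! Suc u \<in> set th" "Suc u < length th" by auto
  moreover have "Q (th ! u) (th ! Suc u) \<noteq> 0" using assms(1) \<open>Suc u < length th\<close>
    by (auto simp: Paths_def admissible_def)
  ultimately show "0 < Q (th ! u) (th ! Suc u)" using assms Paths_set[OF assms(1)]
    by (metis less_eq_real_def subsetD)
qed

lemma weight_nonneg:
  assumes th: "th \<in> Paths k Q" and Qnn: "\<And>i j. i \<in> {1..k} \<Longrightarrow> j \<in> {1..k} \<Longrightarrow> Q i j \<ge> 0"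
    and pinn: "\<And>i. i \<in> {1..k} \<Longrightarrow> \<pi> i \<ge> 0"
  shows "path_weight k \<pi> Q th \<ge> 0"
proof -
  have "th ! 0 \<in> {1..k}" using Paths_set[OF th] Paths_ne[OF th] by (metis length_greater_0_conv nth_mem subsetD)
  then have "\<pi> (th ! 0) \<ge> 0" by (rule pinn)
  moreover have "(\<Prod>u<length th - 1. Q (th ! u) (th ! Suc u)) \<ge> 0" using qp_nonneg[OF th Qnn] by (simp add: qp_def)
  moreover have "(\<Prod>u\<in>Hminus Q th. 1 / (rho_max k Q - rho Q (th ! u))) \<ge> 0"
  proof (rule prod_nonneg)
    fix u assume "u \<in> Hminus Q th"
    then have "rho Q (th ! u) < rho_path Q th" by (simp add: Hminus_def)
    then show "0 \<le> 1 / (rho_max k Q - rho Q (th ! u))" using rho_path_le[OF th] by simp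
  qed
  ultimately show ?thesis unfolding path_weight_def by simp
qed

lemma weight_pos:
  assumes th: "th \<in> Paths k Q" and Qnn: "\<And>i j. i \<in> {1..k} \<Longrightarrow> j \<in> {1..k} \<Longrightarrow> Q i j \<ge> 0"
    and pinn: "\<And>i. i \<in> {1..k} \<Longrightarrow> \<pi> i \<ge> 0" and pz: "\<pi> (th ! 0) \<noteq> 0"
  shows "path_weight k \<pi> Q th > 0"
proof -
  have "th ! 0 \<in> {1..k}" using Paths_set[OF th] Paths_ne[OF th] by (metis length_greater_0_conv nth_mem subsetD)
  then have "\<pi> (th ! 0) > 0" using pinn pz by (simp add: less_le)
  moreover have "(\<Prod>u<length th - 1. Q (th ! u) (th ! Suc u)) > 0" using qp_pos[OF th Qnn] by (simp add: qp_def)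
  moreover have "(\<Prod>u\<in>Hminus Q th. 1 / (rho_max k Q - rho Q (th ! u))) > 0"
  proof (rule prod_pos)
    fix u assume "u \<in> Hminus Q th"
    then have "rho Q (th ! u) < rho_path Q th" by (simp add: Hminus_def)
    then show "0 < 1 / (rho_max k Q - rho Q (th ! u))" using rho_path_le[OF th] by simp
  qed
  ultimately show ?thesis unfolding path_weight_def by simp
qed

lemma weight_eq:
  assumes th: "th \<in> Paths_max k Q"
  shows "\<pi> (hd th) * qp Q th * prod_list (map (\<lambda>r. 1 / (rho_max k Q - r)) (filter (\<lambda>x. x < rho_max k Q) (rates Q th)))
     = path_weight k \<pi> Q th"
proof -
  have P: "th \<in> Paths k Q" and r: "rho_path Q th = rho_max k Q" using th by (auto simp: Paths_max_def)
  have "(\<Prod>u\<in>Hminus Q th. 1 / (rho_max k Q - rho Q (th ! u)))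
      = prod_list (map (\<lambda>r. 1 / (rho_max k Q - r)) (filter (\<lambda>x. x < rho_max k Q) (rates Q th)))"
    using Hminus_prod[of "\<lambda>r. 1 / (rho_max k Q - r)" Q th] r by simp
  moreover have "hd th = th ! 0" using Paths_ne[OF P] by (simp add: hd_conv_nth)
  ultimately show ?thesis by (simp add: path_weight_def qp_def)
qed

theorem corollary3p17:
  fixes k :: nat and R :: "nat \<Rightarrow> real" and Q :: "nat \<Rightarrow> nat \<Rightarrow> real"
    and \<pi> :: "nat \<Rightarrow> real"
  assumes k2: "k \<ge> 2"
    and stoch: "stochastic k (Pmat R Q)"
    and R_nz: "\<exists>i\<in>{1..k}. R i \<noteq> 0"
    and Q_nz: "\<exists>i\<in>{1..k}. \<exists>j\<in>{1..k}. Q i j \<noteq> 0"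
    and eig: "\<And>z. is_eigenvalue k Q z \<Longrightarrow> cmod z < 1"
    and lt: "lower_triangular k Q"
    and diag_pos: "\<And>i. i \<in> {1..k} \<Longrightarrow> Q i i > 0"
    and pi_nonneg: "\<And>i. i \<in> {1..k} \<Longrightarrow> \<pi> i \<ge> 0"
    and pi_sum: "(\<Sum>i=1..k. \<pi> i) = 1"
    and pi_max: "\<exists>th\<in>Paths_max k Q. \<pi> (th ! 0) \<noteq> 0"
  shows "\<forall>l\<in>{1..k}.
     ((rho Q l < rho_max k Q \<or> Paths_max_l k Q l = {}) \<longrightarrow>
        (occ_cond_exp k \<pi> R Q l \<longlonglongrightarrow> 0)) \<and>
     ((rho Q l = rho_max k Q \<and> Paths_max_l k Q l \<noteq> {}) \<longrightarrow>
        (occ_cond_exp k \<pi> R Q l \<longlonglongrightarrow>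
          (1 / real (hplus_max k Q)) *
          ((\<Sum>th\<in>Paths_max_l k Q l. path_weight k \<pi> Q th) /
           (\<Sum>th\<in>Paths_max k Q. path_weight k \<pi> Q th))))"
proof -
  define \<rho> where "\<rho> = rho_max k Q"
  define H where "H = hplus_max k Q"
  have Qnn: "Q i j \<ge> 0" if "i \<in> {1..k}" "j \<in> {1..k}" for i j
  proof -
    have "Pmat R Q i j \<ge> 0" using stoch that unfolding stochastic_def by auto
    then show ?thesis using that by (simp add: Pmat_def)
  qed
  obtain th0 where th0: "th0 \<in> Paths_max k Q" "\<pi> (th0 ! 0) \<noteq> 0" using pi_max by blast
  have th0P: "th0 \<in> Paths k Q" using th0 by (simp add: Paths_max_def)
  have H1: "H \<ge> 1" using th0 hplus_pos[OF th0P] by (simp add: Paths_max_def H_def)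
  have H1': "hplus_max k Q \<ge> 1" using th0 hplus_pos[OF th0P] by (simp add: Paths_max_def)
  have rpos: "\<rho> > 0"
  proof -
    have "rho_path Q th0 = \<rho>" using th0 by (simp add: Paths_max_def \<rho>_def)
    then show ?thesis using rates_pos[OF th0P diag_pos] rho_path_in[OF th0P] by auto
  qed
  define c where "c th = prod_list (map (\<lambda>r. 1 / (\<rho> - r)) (filter (\<lambda>x. x < \<rho>) (rates Q th))) / \<rho> ^ (H - 1)" for th
  define s where "s n = real (n choose (H - 1)) * \<rho> ^ n" for n
  define D where "D n = (\<Sum>th\<in>Paths k Q. \<pi> (hd th) * (qp Q th * gg (rates Q th) n))" for n
  have Dn: "(\<Sum>x\<in>trajectories k n. path_prob k \<pi> R Q n x * (if T_gt n x then 1 else 0)) = D n" for n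
    unfolding denom_eq D_def regroup[of \<pi> "\<lambda>th. qp Q th * gg (rates Q th) n", symmetric]
    by (intro sum.cong refl) (simp add: W_paths[OF lt])
  show ?thesis
  proof (intro ballI conjI impI)
    fix l assume l: "l \<in> {1..k}"
    define N where "N n = (\<Sum>th\<in>Paths k Q. \<pi> (hd th) *
        (if l \<in> set th then qp Q th * gg (rho Q l # rates Q th) (Suc n) else 0))" for n
    have Nn: "(\<Sum>x\<in>trajectories k n. path_prob k \<pi> R Q n x * (if T_gt n x then 1 else 0)
        * (real (card {m\<in>{0..n}. x m \<in> I_set l}) / real (n + 1))) = N n / real (n + 1)" for n
      unfolding numer_eq N_def regroup[of \<pi> "\<lambda>th. if l \<in> set th then qp Q th * gg (rho Q l # rates Q th) (Suc n) else 0", symmetric]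
      by (intro arg_cong2[where f="(/)"] sum.cong refl) (simp add: M_paths[OF lt])
    have occ: "occ_cond_exp k \<pi> R Q l n = (N n / real (n + 1)) / D n" for n
      unfolding occ_cond_exp_def Nn Dn ..
    define DL where "DL = (\<Sum>th\<in>Paths k Q. \<pi> (hd th) * (qp Q th * (if th \<in> Paths_max k Q then c th else 0)))"
    define NL where "NL = (\<Sum>th\<in>Paths k Q. \<pi> (hd th) * (if l \<in> set th then qp Q th *
        (if th \<in> Paths_max k Q \<and> rho Q l = \<rho> then c th / real H else 0) else 0))"
    have DLim: "(\<lambda>n. D n / s n) \<longlonglongrightarrow> DL"
    proof -
      have "(\<lambda>n. \<Sum>th\<in>Paths k Q. \<pi> (hd th) * (qp Q th * (gg (rates Q th) n / s n))) \<longlonglongrightarrow> DL"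
      proof -
        have per: "(\<lambda>n. gg (rates Q th) n / s n) \<longlonglongrightarrow> (if th \<in> Paths_max k Q then c th else 0)"
          if "th \<in> Paths k Q" for th
          unfolding s_def c_def \<rho>_def H_def by (rule LD[OF that diag_pos])
        show ?thesis unfolding DL_def by (intro tendsto_sum tendsto_mult tendsto_const per)
      qed
      moreover have "D n / s n = (\<Sum>th\<in>Paths k Q. \<pi> (hd th) * (qp Q th * (gg (rates Q th) n / s n)))" for n
        unfolding D_def sum_divide_distrib by (simp add: algebra_simps)
      ultimately show ?thesis by simp
    qed
    have NLim: "(\<lambda>n. N n / real (n + 1) / s n) \<longlonglongrightarrow> NL"
    proof -
      have "(\<lambda>n. \<Sum>th\<in>Paths k Q. \<pi> (hd th) * (if l \<in> set th then qp Q th *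
          (gg (rho Q l # rates Q th) (Suc n) / (real (n + 1) * s n)) else 0)) \<longlonglongrightarrow> NL"
        unfolding NL_def
      proof (intro tendsto_sum tendsto_mult tendsto_const)
        fix th assume th: "th \<in> Paths k Q"
        show "(\<lambda>n. if l \<in> set th then qp Q th * (gg (rho Q l # rates Q th) (Suc n) / (real (n + 1) * s n)) else 0)
          \<longlonglongrightarrow> (if l \<in> set th then qp Q th * (if th \<in> Paths_max k Q \<and> rho Q l = \<rho> then c th / real H else 0) else 0)"
        proof (cases "l \<in> set th")
          case True
          have "(\<lambda>n. gg (rho Q l # rates Q th) (Suc n) / (real (n + 1) * s n))
              \<longlonglongrightarrow> (if th \<in> Paths_max k Q \<and> rho Q l = \<rho> then c th / real H else 0)"
            unfolding s_def c_def \<rho>_def H_def by (rule LN[OF th True diag_pos H1'])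
          then show ?thesis unfolding if_P[OF True] by (rule tendsto_mult_left)
        qed simp
      qed
      moreover have "N n / real (n + 1) / s n = (\<Sum>th\<in>Paths k Q. \<pi> (hd th) * (if l \<in> set th then qp Q th *
          (gg (rho Q l # rates Q th) (Suc n) / (real (n + 1) * s n)) else 0))" for n
        unfolding N_def sum_divide_distrib by (intro sum.cong refl) (simp add: field_simps)
      ultimately show ?thesis by simp
    qed
    define WT where "WT = (\<Sum>th\<in>Paths_max k Q. path_weight k \<pi> Q th)"
    have DLeq: "DL = WT / \<rho> ^ (H - 1)"
    proof -
      have "DL = (\<Sum>th\<in>Paths k Q. if th \<in> Paths_max k Q then \<pi> (hd th) * qp Q th * c th else 0)"
        unfolding DL_def by (intro sum.cong refl) simp
      also have "\<dots> = (\<Sum>th\<in>Paths_max k Q. \<pi> (hd th) * qp Q th * c th)"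
        by (rule sum_if_sub[OF finite_Paths]) (auto simp: Paths_max_def)
      also have "\<dots> = (\<Sum>th\<in>Paths_max k Q. path_weight k \<pi> Q th / \<rho> ^ (H - 1))"
        by (intro sum.cong refl) (simp add: c_def weight_eq[symmetric] \<rho>_def)
      finally show ?thesis by (simp add: WT_def sum_divide_distrib)
    qed
    have WTpos: "WT > 0"
    proof -
      have fin: "finite (Paths_max k Q)" using finite_Paths by (rule finite_subset[rotated]) (auto simp: Paths_max_def)
      have p0: "path_weight k \<pi> Q th0 > 0" by (rule weight_pos[where \<pi>=\<pi>, OF th0P Qnn pi_nonneg th0(2)])
      have nn: "path_weight k \<pi> Q th \<ge> 0" if "th \<in> Paths_max k Q" for th
        using that by (intro weight_nonneg[where \<pi>=\<pi>, OF _ Qnn pi_nonneg]) (auto simp: Paths_max_def)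
      show ?thesis unfolding WT_def
        by (rule sum_pos2[where f="path_weight k \<pi> Q", OF fin th0(1) p0 nn])
    qed
    have DLnz: "DL \<noteq> 0" using DLeq WTpos rpos by simp
    have lim: "occ_cond_exp k \<pi> R Q l \<longlonglongrightarrow> NL / DL"
    proof -
      have "(\<lambda>n. (N n / real (n + 1) / s n) / (D n / s n)) \<longlonglongrightarrow> NL / DL"
        by (rule tendsto_divide[OF NLim DLim DLnz])
      moreover have "eventually (\<lambda>n. (N n / real (n + 1) / s n) / (D n / s n) = occ_cond_exp k \<pi> R Q l n) sequentially"
        using eventually_ge_at_top[of "H - 1"]
      proof eventually_elim
        case (elim n)
        then have "s n \<noteq> 0" using rpos by (simp add: s_def)
        then show ?case unfolding occ by simp
      qed
      ultimately show ?thesis by (rule Lim_transform_eventually)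
    qed
    show "occ_cond_exp k \<pi> R Q l \<longlonglongrightarrow> 0"
      if "rho Q l < rho_max k Q \<or> Paths_max_l k Q l = {}"
    proof -
      have "NL = 0" unfolding NL_def
      proof (intro sum.neutral ballI)
        fix th assume th: "th \<in> Paths k Q"
        show "\<pi> (hd th) * (if l \<in> set th then qp Q th * (if th \<in> Paths_max k Q \<and> rho Q l = \<rho> then c th / real H else 0) else 0) = 0"
          using that th by (auto simp: \<rho>_def Paths_max_l_def Paths_l_def)
      qed
      then show ?thesis using lim by simp
    qed
    show "occ_cond_exp k \<pi> R Q l \<longlonglongrightarrow> 1 / real (hplus_max k Q) *
          ((\<Sum>th\<in>Paths_max_l k Q l. path_weight k \<pi> Q th) / (\<Sum>th\<in>Paths_max k Q. path_weight k \<pi> Q th))"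
      if cnd: "rho Q l = rho_max k Q \<and> Paths_max_l k Q l \<noteq> {}"
    proof -
      define WL where "WL = (\<Sum>th\<in>Paths_max_l k Q l. path_weight k \<pi> Q th)"
      have "NL = (\<Sum>th\<in>Paths k Q. if th \<in> Paths_max_l k Q l then \<pi> (hd th) * qp Q th * c th / real H else 0)"
        unfolding NL_def using cnd by (intro sum.cong refl) (auto simp: \<rho>_def Paths_max_l_def Paths_l_def)
      also have "\<dots> = (\<Sum>th\<in>Paths_max_l k Q l. \<pi> (hd th) * qp Q th * c th / real H)"
        by (rule sum_if_sub[OF finite_Paths]) (auto simp: Paths_max_l_def Paths_l_def)
      also have "\<dots> = (\<Sum>th\<in>Paths_max_l k Q l. path_weight k \<pi> Q th / \<rho> ^ (H - 1) / real H)"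
        by (intro sum.cong refl) (simp add: c_def weight_eq[symmetric] \<rho>_def Paths_max_l_def)
      finally have NLeq: "NL = WL / \<rho> ^ (H - 1) / real H" by (simp add: WL_def sum_divide_distrib)
      have "NL / DL = 1 / real H * (WL / WT)"
        unfolding NLeq DLeq using rpos H1 WTpos by (simp add: field_simps)
      then show ?thesis using lim by (simp add: WL_def WT_def H_def)
    qed
  qed
qed


end
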